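(* Let $X$ be a finite connected poset and $F$ a field with $\mathrm{char}(F)\ne 2$. Then every bijective $F$-linear map $\varphi:I(X,F)\to I(X,F)$ satisfying $\varphi(E(I(X,F)))\subseteq E(I(X,F))$ is either an automorphism or an anti-automorphism of $I(X,F)$.
   Context: $I(X,F)$ is the incidence algebra of the locally finite poset $X$ over $F$ (functions $f:X\times X\to F$ vanishing unless $x\le y$, with product $(fg)(x,y)=\sum_{x\le z\le y}f(x,z)g(z,y)$). A poset is connected if any two elements are joined by a finite sequence of elements in which consecutive elements are comparable. $E(A)$ denotes the set of idempotents of a ring $A$. *)

theory Defs
  imports Main
begin

text \<open>A poset is given as a subset X of a type with a partial order; the
order of X is the restriction of the ambient order.\<close>

definition connected_poset :: "'a::order set \<Rightarrow> bool" where
  "connected_poset X \<longleftrightarrow>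
     (\<forall>x\<in>X. \<forall>y\<in>X. (\<lambda>a b. a \<in> X \<and> b \<in> X \<and> (a \<le> b \<or> b \<le> a))\<^sup>*\<^sup>* x y)"

definition inc_alg :: "'a::order set \<Rightarrow> ('a \<Rightarrow> 'a \<Rightarrow> 'b::field) set" where
  "inc_alg X = {f. \<forall>x y. f x y \<noteq> 0 \<longrightarrow> x \<in> X \<and> y \<in> X \<and> x \<le> y}"

definition inc_mult :: "'a::order set \<Rightarrow> ('a \<Rightarrow> 'a \<Rightarrow> 'b::field) \<Rightarrow> ('a \<Rightarrow> 'a \<Rightarrow> 'b) \<Rightarrow> ('a \<Rightarrow> 'a \<Rightarrow> 'b)" where
  "inc_mult X f g = (\<lambda>x y. \<Sum>z\<in>{z\<in>X. x \<le> z \<and> z \<le> y}. f x z * g z y)"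

definition inc_idempotents :: "'a::order set \<Rightarrow> ('a \<Rightarrow> 'a \<Rightarrow> 'b::field) set" where
  "inc_idempotents X = {e \<in> inc_alg X. inc_mult X e e = e}"

definition inc_linear :: "'a::order set \<Rightarrow> (('a \<Rightarrow> 'a \<Rightarrow> 'b::field) \<Rightarrow> ('a \<Rightarrow> 'a \<Rightarrow> 'b)) \<Rightarrow> bool" where
  "inc_linear X \<phi> \<longleftrightarrow>
     (\<forall>f\<in>inc_alg X. \<forall>g\<in>inc_alg X. \<phi> (\<lambda>x y. f x y + g x y) = (\<lambda>x y. \<phi> f x y + \<phi> g x y)) \<and>
     (\<forall>c. \<forall>f\<in>inc_alg X. \<phi> (\<lambda>x y. c * f x y) = (\<lambda>x y. c * \<phi> f x y))"

definition inc_automorphism :: "'a::order set \<Rightarrow> (('a \<Rightarrow> 'a \<Rightarrow> 'b::field) \<Rightarrow> ('a \<Rightarrow> 'a \<Rightarrow> 'b)) \<Rightarrow> bool" where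
  "inc_automorphism X \<phi> \<longleftrightarrow> bij_betw \<phi> (inc_alg X) (inc_alg X) \<and> inc_linear X \<phi> \<and>
     (\<forall>f\<in>inc_alg X. \<forall>g\<in>inc_alg X. \<phi> (inc_mult X f g) = inc_mult X (\<phi> f) (\<phi> g))"

definition inc_anti_automorphism :: "'a::order set \<Rightarrow> (('a \<Rightarrow> 'a \<Rightarrow> 'b::field) \<Rightarrow> ('a \<Rightarrow> 'a \<Rightarrow> 'b)) \<Rightarrow> bool" where
  "inc_anti_automorphism X \<phi> \<longleftrightarrow> bij_betw \<phi> (inc_alg X) (inc_alg X) \<and> inc_linear X \<phi> \<and>
     (\<forall>f\<in>inc_alg X. \<forall>g\<in>inc_alg X. \<phi> (inc_mult X f g) = inc_mult X (\<phi> g) (\<phi> f))"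

end

theory Submission
  imports Defs "HOL-Library.Function_Algebras"
begin
definition sc :: "'b::field \<Rightarrow> ('a \<Rightarrow> 'a \<Rightarrow> 'b) \<Rightarrow> ('a \<Rightarrow> 'a \<Rightarrow> 'b)" where
  "sc c f = (\<lambda>x y. c * f x y)"

definition Eb :: "'a \<Rightarrow> 'a \<Rightarrow> 'a \<Rightarrow> 'a \<Rightarrow> 'b::field" where
  "Eb p q = (\<lambda>x y. if x = p \<and> y = q then 1 else 0)"

definition one_inc :: "'a::order set \<Rightarrow> 'a \<Rightarrow> 'a \<Rightarrow> 'b::field" where
  "one_inc X = (\<lambda>x y. if x = y \<and> x \<in> X then 1 else 0)"

lemma sum_fun_apply2: "(sum F I) x y = (\<Sum>i\<in>I. F i x y)"
  by (induction I rule: infinite_finite_induct) auto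

lemma lam_add: "(\<lambda>x y. f x y + g x y) = f + g" by (simp add: fun_eq_iff)

context fixes X :: "'a::order set"
begin

lemma M_add_left: "inc_mult X (f + g) h = inc_mult X f h + inc_mult X g h"
  by (simp add: inc_mult_def fun_eq_iff distrib_right sum.distrib)
lemma M_add_right: "inc_mult X h (f + g) = inc_mult X h f + inc_mult X h g"
  by (simp add: inc_mult_def fun_eq_iff distrib_left sum.distrib)
lemma M_minus_left: "inc_mult X (- f) h = - inc_mult X f h"
  by (simp add: inc_mult_def fun_eq_iff sum_negf)
lemma M_minus_right: "inc_mult X h (- f) = - inc_mult X h f"
  by (simp add: inc_mult_def fun_eq_iff sum_negf)
lemma M_diff_left: "inc_mult X (f - g) h = inc_mult X f h - inc_mult X g h"
  by (simp add: inc_mult_def fun_eq_iff left_diff_distrib sum_subtractf)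
lemma M_diff_right: "inc_mult X h (f - g) = inc_mult X h f - inc_mult X h g"
  by (simp add: inc_mult_def fun_eq_iff right_diff_distrib sum_subtractf)
lemma M_zero_left: "inc_mult X 0 h = 0"
  by (simp add: inc_mult_def fun_eq_iff)
lemma M_zero_right: "inc_mult X h 0 = 0"
  by (simp add: inc_mult_def fun_eq_iff)
lemma M_sc_left: "inc_mult X (sc c f) h = sc c (inc_mult X f h)"
  by (simp add: inc_mult_def sc_def fun_eq_iff sum_distrib_left mult.assoc)
lemma M_sc_right: "inc_mult X h (sc c f) = sc c (inc_mult X h f)"
  by (simp add: inc_mult_def sc_def fun_eq_iff sum_distrib_left mult.left_commute)
lemma M_sum_left: "inc_mult X (sum F I) h = (\<Sum>i\<in>I. inc_mult X (F i) h)"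
proof (induction I rule: infinite_finite_induct)
  case (infinite A) then show ?case by (metis M_zero_left sum.infinite)
next
  case empty then show ?case by (metis M_zero_left sum.empty)
next
  case (insert i J)
  have "sum F (insert i J) = F i + sum F J" using insert.hyps by (rule sum.insert)
  moreover have "(\<Sum>k\<in>insert i J. inc_mult X (F k) h) = inc_mult X (F i) h + (\<Sum>k\<in>J. inc_mult X (F k) h)"
    using insert.hyps by (rule sum.insert)
  ultimately show ?case using insert.IH by (simp only: M_add_left)
qed
lemma M_sum_right: "inc_mult X h (sum F I) = (\<Sum>i\<in>I. inc_mult X h (F i))"
proof (induction I rule: infinite_finite_induct)
  case (infinite A) then show ?case by (metis M_zero_right sum.infinite)
next
  case empty then show ?case by (metis M_zero_right sum.empty)
next
  case (insert i J)
  have "sum F (insert i J) = F i + sum F J" using insert.hyps by (rule sum.insert)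
  moreover have "(\<Sum>k\<in>insert i J. inc_mult X h (F k)) = inc_mult X h (F i) + (\<Sum>k\<in>J. inc_mult X h (F k))"
    using insert.hyps by (rule sum.insert)
  ultimately show ?case using insert.IH by (simp only: M_add_right)
qed

lemma M_assoc:
  assumes fin: "finite X"
  shows "inc_mult X (inc_mult X f g) h = inc_mult X f (inc_mult X g h)"
proof -
  have "(\<Sum>z\<in>{z \<in> X. x \<le> z \<and> z \<le> y}. (\<Sum>w\<in>{w \<in> X. x \<le> w \<and> w \<le> z}. f x w * g w z) * h z y)
      = (\<Sum>w\<in>{w \<in> X. x \<le> w \<and> w \<le> y}. f x w * (\<Sum>z\<in>{z \<in> X. w \<le> z \<and> z \<le> y}. g w z * h z y))"
    for x y
  proof -
    define I where "I = {z \<in> X. x \<le> z \<and> z \<le> y}"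
    have fI: "finite I" using fin by (simp add: I_def)
    have "(\<Sum>z\<in>{z \<in> X. x \<le> z \<and> z \<le> y}. (\<Sum>w\<in>{w \<in> X. x \<le> w \<and> w \<le> z}. f x w * g w z) * h z y)
       = (\<Sum>z\<in>I. \<Sum>w\<in>{w\<in>I. w \<le> z}. f x w * g w z * h z y)"
      unfolding I_def
      apply (rule sum.cong[OF refl])
      apply (simp add: sum_distrib_right)
      apply (rule sum.cong)
       apply (auto intro: order_trans)
      done
    also have "\<dots> = (\<Sum>w\<in>I. \<Sum>z\<in>{z\<in>I. w \<le> z}. f x w * g w z * h z y)"
      by (rule sum.swap_restrict[OF fI fI])
    also have "\<dots> = (\<Sum>w\<in>{w \<in> X. x \<le> w \<and> w \<le> y}. f x w * (\<Sum>z\<in>{z \<in> X. w \<le> z \<and> z \<le> y}. g w z * h z y))"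
      unfolding I_def
      apply (rule sum.cong[OF refl])
      apply (simp add: sum_distrib_left mult.assoc)
      apply (rule sum.cong)
       apply (auto intro: order_trans)
      done
    finally show ?thesis .
  qed
  then show ?thesis by (simp add: inc_mult_def fun_eq_iff)
qed

lemma inc_alg_iff: "f \<in> inc_alg X \<longleftrightarrow> (\<forall>x y. \<not>(x\<in>X \<and> y\<in>X \<and> x\<le>y) \<longrightarrow> f x y = 0)"
  by (auto simp: inc_alg_def)
lemma inc_alg_add: "f \<in> inc_alg X \<Longrightarrow> g \<in> inc_alg X \<Longrightarrow> f + g \<in> inc_alg X"
  by (simp add: inc_alg_iff)
lemma inc_alg_minus: "f \<in> inc_alg X \<Longrightarrow> - f \<in> inc_alg X"
  by (simp add: inc_alg_iff)
lemma inc_alg_diff: "f \<in> inc_alg X \<Longrightarrow> g \<in> inc_alg X \<Longrightarrow> f - g \<in> inc_alg X"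
  by (simp add: inc_alg_iff)
lemma inc_alg_zero: "0 \<in> inc_alg X"
  by (simp add: inc_alg_iff)
lemma inc_alg_sc: "f \<in> inc_alg X \<Longrightarrow> sc c f \<in> inc_alg X"
  by (simp add: inc_alg_iff sc_def)
lemma inc_alg_sum: "(\<And>i. i \<in> I \<Longrightarrow> F i \<in> inc_alg X) \<Longrightarrow> sum F I \<in> inc_alg X"
proof (induction I rule: infinite_finite_induct)
  case (infinite A) then show ?case by (metis inc_alg_zero sum.infinite)
next
  case empty then show ?case by (metis inc_alg_zero sum.empty)
next
  case (insert i J)
  have eq: "sum F (insert i J) = F i + sum F J" using insert.hyps by (rule sum.insert)
  have a: "F i \<in> inc_alg X" using insert.prems by blast
  have b: "sum F J \<in> inc_alg X" using insert.prems insert.IH by blast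
  show ?case unfolding eq by (rule inc_alg_add[OF a b])
qed
lemma inc_alg_Eb: "p \<in> X \<Longrightarrow> q \<in> X \<Longrightarrow> p \<le> q \<Longrightarrow> Eb p q \<in> inc_alg X"
  by (auto simp: inc_alg_def Eb_def)
lemma inc_alg_one: "one_inc X \<in> inc_alg X"
  by (auto simp: inc_alg_def one_inc_def)
lemma inc_alg_M: "f \<in> inc_alg X \<Longrightarrow> g \<in> inc_alg X \<Longrightarrow> inc_mult X f g \<in> inc_alg X"
proof -
  assume f: "f \<in> inc_alg X" and g: "g \<in> inc_alg X"
  have "inc_mult X f g x y = 0" if nv: "\<not>(x\<in>X \<and> y\<in>X \<and> x\<le>y)" for x y
  proof -
    have "f x z * g z y = 0" if z: "z \<in> {z \<in> X. x \<le> z \<and> z \<le> y}" for z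
    proof (cases "x \<in> X \<and> y \<in> X")
      case True
      then have "\<not> x \<le> y" using nv by blast
      then show ?thesis using z by (auto intro: order.trans)
    next
      case False
      then have "f x z = 0 \<or> g z y = 0" using f g z by (auto simp: inc_alg_def)
      then show ?thesis by auto
    qed
    then show ?thesis unfolding inc_mult_def by (simp add: sum.neutral)
  qed
  then show ?thesis by (simp add: inc_alg_iff)
qed

lemma M_Eb: "finite X \<Longrightarrow> p \<in> X \<Longrightarrow> q \<in> X \<Longrightarrow> p \<le> q \<Longrightarrow> r \<le> s \<Longrightarrow>
   inc_mult X (Eb p q) (Eb r s) = (if q = r then Eb p s else 0)"
proof -
  assume a: "finite X" "p \<in> X" "q \<in> X" "p \<le> q" "r \<le> s"
  have "inc_mult X (Eb p q) (Eb r s) x y = (if q = r then Eb p s x y else 0)" for x y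
  proof -
    have "inc_mult X (Eb p q) (Eb r s) x y =
       (\<Sum>z\<in>{z \<in> X. x \<le> z \<and> z \<le> y}. if z = q then (if x = p \<and> q = r \<and> y = s then 1 else 0) else 0)"
      unfolding inc_mult_def Eb_def by (rule sum.cong) auto
    also have "\<dots> = (if q = r then Eb p s x y else 0)"
      using a by (auto simp: Eb_def)
    finally show ?thesis .
  qed
  then show ?thesis by (auto simp: fun_eq_iff)
qed
end

definition PX :: "'a::order set \<Rightarrow> ('a \<times> 'a) set" where
  "PX X = {pq. fst pq \<in> X \<and> snd pq \<in> X \<and> fst pq \<le> snd pq}"

context fixes X :: "'a::order set" assumes fin: "finite X"
begin

lemma M_one_left: "f \<in> inc_alg X \<Longrightarrow> inc_mult X (one_inc X) f = f"
proof -
  assume f: "f \<in> inc_alg X"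
  have "inc_mult X (one_inc X) f x y = f x y" for x y
  proof -
    have "inc_mult X (one_inc X) f x y = (\<Sum>z\<in>{z \<in> X. x \<le> z \<and> z \<le> y}. if z = x then f x y else 0)"
      unfolding inc_mult_def one_inc_def by (rule sum.cong) auto
    also have "\<dots> = f x y" using f fin by (auto simp: inc_alg_def)
    finally show ?thesis .
  qed
  then show ?thesis by (auto simp: fun_eq_iff)
qed

lemma M_one_right: "f \<in> inc_alg X \<Longrightarrow> inc_mult X f (one_inc X) = f"
proof -
  assume f: "f \<in> inc_alg X"
  have "inc_mult X f (one_inc X) x y = f x y" for x y
  proof -
    have "inc_mult X f (one_inc X) x y = (\<Sum>z\<in>{z \<in> X. x \<le> z \<and> z \<le> y}. if z = y then f x y else 0)"
      unfolding inc_mult_def one_inc_def by (rule sum.cong) auto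
    also have "\<dots> = f x y" using f fin by (auto simp: inc_alg_def)
    finally show ?thesis .
  qed
  then show ?thesis by (auto simp: fun_eq_iff)
qed



lemma finite_PX: "finite X \<Longrightarrow> finite (PX X)"
  by (rule finite_subset[of _ "X \<times> X"]) (auto simp: PX_def)

lemma decomp: assumes "finite X" "f \<in> inc_alg X"
  shows "f = (\<Sum>pq\<in>PX X. sc (f (fst pq) (snd pq)) (Eb (fst pq) (snd pq)))"
proof -
  have "(\<Sum>pq\<in>PX X. sc (f (fst pq) (snd pq)) (Eb (fst pq) (snd pq))) x y = f x y" for x y
  proof -
    have "(\<Sum>pq\<in>PX X. sc (f (fst pq) (snd pq)) (Eb (fst pq) (snd pq))) x y
       = (\<Sum>pq\<in>PX X. if pq = (x,y) then f x y else 0)"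
      unfolding sum_fun_apply2 sc_def Eb_def by (rule sum.cong) auto
    also have "\<dots> = (if (x,y) \<in> PX X then f x y else 0)"
      using finite_PX[OF assms(1)] by (simp add: sum.delta')
    also have "\<dots> = f x y"
      using assms by (auto simp: PX_def inc_alg_def)
    finally show ?thesis .
  qed
  then show ?thesis by (auto simp: fun_eq_iff)
qed

lemma one_decomp: "one_inc X = (\<Sum>p\<in>X. Eb p p)"
proof -
  have "(\<Sum>p\<in>X. Eb p p) x y = one_inc X x y" for x y
  proof -
    have "(\<Sum>p\<in>X. Eb p p) x y = (\<Sum>p\<in>X. if p = x then (if x = y then 1 else 0) else 0)"
      unfolding sum_fun_apply2 Eb_def by (rule sum.cong) auto
    also have "\<dots> = one_inc X x y" using fin by (simp add: one_inc_def)
    finally show ?thesis .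
  qed
  note pw = this
  show ?thesis by (rule ext, rule ext, rule sym, rule pw)
qed

end

locale lin =
  fixes X :: "'a::order set" and \<phi> :: "('a \<Rightarrow> 'a \<Rightarrow> 'b::field) \<Rightarrow> ('a \<Rightarrow> 'a \<Rightarrow> 'b)"
  assumes lin: "inc_linear X \<phi>"
    and into: "\<And>f. f \<in> inc_alg X \<Longrightarrow> \<phi> f \<in> inc_alg X"
begin

lemma phi_add: "f \<in> inc_alg X \<Longrightarrow> g \<in> inc_alg X \<Longrightarrow> \<phi> (f + g) = \<phi> f + \<phi> g"
proof -
  assume f: "f \<in> inc_alg X" and g: "g \<in> inc_alg X"
  have l: "\<forall>f\<in>inc_alg X. \<forall>g\<in>inc_alg X. \<phi> (\<lambda>x y. f x y + g x y) = (\<lambda>x y. \<phi> f x y + \<phi> g x y)"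
    using lin unfolding inc_linear_def by (rule conjunct1)
  have "\<phi> (\<lambda>x y. f x y + g x y) = (\<lambda>x y. \<phi> f x y + \<phi> g x y)"
    by (rule l[rule_format, OF f g])
  moreover have "f + g = (\<lambda>x y. f x y + g x y)" by (simp add: fun_eq_iff)
  moreover have "\<phi> f + \<phi> g = (\<lambda>x y. \<phi> f x y + \<phi> g x y)" by (simp add: fun_eq_iff)
  ultimately show ?thesis by simp
qed

lemma phi_sc: "f \<in> inc_alg X \<Longrightarrow> \<phi> (sc c f) = sc c (\<phi> f)"
proof -
  assume f: "f \<in> inc_alg X"
  have l: "\<forall>c. \<forall>f\<in>inc_alg X. \<phi> (\<lambda>x y. c * f x y) = (\<lambda>x y. c * \<phi> f x y)"
    using lin unfolding inc_linear_def by (rule conjunct2)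
  show ?thesis unfolding sc_def by (rule l[rule_format, OF f])
qed

lemma phi_zero: "\<phi> 0 = 0"
proof -
  have "\<phi> (sc 0 0) = sc 0 (\<phi> 0)" by (rule phi_sc[OF inc_alg_zero])
  moreover have "sc 0 (0::'a\<Rightarrow>'a\<Rightarrow>'b) = 0" "sc 0 (\<phi> 0) = 0" by (auto simp: sc_def fun_eq_iff)
  ultimately show ?thesis by simp
qed

lemma sc_m1: "sc (-1) f = - f" by (auto simp: sc_def fun_eq_iff)

lemma phi_minus: "f \<in> inc_alg X \<Longrightarrow> \<phi> (- f) = - \<phi> f"
  using phi_sc[of f "-1"] by (simp add: sc_m1)

lemma phi_diff: "f \<in> inc_alg X \<Longrightarrow> g \<in> inc_alg X \<Longrightarrow> \<phi> (f - g) = \<phi> f - \<phi> g"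
  using phi_add[of f "-g"] phi_minus[of g] inc_alg_minus[of g X] by simp

lemma phi_sum: "(\<And>i. i \<in> I \<Longrightarrow> F i \<in> inc_alg X) \<Longrightarrow> \<phi> (sum F I) = (\<Sum>i\<in>I. \<phi> (F i))"
proof (induction I rule: infinite_finite_induct)
  case (infinite A) then show ?case using phi_zero by (metis sum.infinite)
next
  case empty then show ?case using phi_zero by (metis sum.empty)
next
  case (insert i J)
  have "sum F (insert i J) = F i + sum F J" using insert.hyps by (rule sum.insert)
  moreover have "(\<Sum>k\<in>insert i J. \<phi> (F k)) = \<phi> (F i) + (\<Sum>k\<in>J. \<phi> (F k))"
    using insert.hyps by (rule sum.insert)
  moreover have b: "sum F J \<in> inc_alg X" using insert.prems by (intro inc_alg_sum) auto
  moreover have a: "F i \<in> inc_alg X" using insert.prems by blast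
  moreover have ih: "\<phi> (sum F J) = (\<Sum>k\<in>J. \<phi> (F k))" using insert.IH insert.prems by blast
  ultimately show ?case by (simp only: phi_add[OF a b])
qed

end

lemma two_cancel:
  fixes f :: "'a \<Rightarrow> 'a \<Rightarrow> 'b::field"
  assumes two: "(2::'b) \<noteq> 0" and h: "f + f = 0" shows "f = 0"
proof -
  have z: "f x y = 0" for x y
  proof -
    have "(f + f) x y = (0::'a \<Rightarrow> 'a \<Rightarrow> 'b) x y" by (simp only: h)
    then have "f x y + f x y = 0" by (simp only: plus_fun_apply zero_fun_apply)
    then have "2 * f x y = 0" by (simp only: mult_2)
    then show ?thesis using two by simp
  qed
  show ?thesis by (intro ext) (simp only: z zero_fun_apply)
qed

locale setting = lin X \<phi> for X :: "'a::order set" and \<phi> :: "('a \<Rightarrow> 'a \<Rightarrow> 'b::field) \<Rightarrow> ('a \<Rightarrow> 'a \<Rightarrow> 'b)" +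
  assumes fin: "finite X" and two: "(2::'b) \<noteq> 0"
    and inj: "inj_on \<phi> (inc_alg X)" and surj: "\<phi> ` inc_alg X = inc_alg X"
    and idem: "\<And>e. e \<in> inc_idempotents X \<Longrightarrow> \<phi> e \<in> inc_idempotents X"
begin

abbreviation M :: "('a \<Rightarrow> 'a \<Rightarrow> 'b) \<Rightarrow> ('a \<Rightarrow> 'a \<Rightarrow> 'b) \<Rightarrow> ('a \<Rightarrow> 'a \<Rightarrow> 'b)" where "M \<equiv> inc_mult X"

definition idm :: "('a \<Rightarrow> 'a \<Rightarrow> 'b) \<Rightarrow> bool" where "idm e \<longleftrightarrow> e \<in> inc_alg X \<and> M e e = e"

lemma idm_phi: "idm e \<Longrightarrow> idm (\<phi> e)"
  using idem unfolding idm_def inc_idempotents_def by blast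

lemma J1:
  assumes a: "a \<in> inc_alg X" and n: "n \<in> inc_alg X" and ia: "idm a"
    and i1: "idm (a + n)" and i2: "idm (a - n)"
  shows "M (\<phi> n) (\<phi> n) = 0" "M (\<phi> a) (\<phi> n) + M (\<phi> n) (\<phi> a) = \<phi> n"
proof -
  let ?A = "\<phi> a" and ?N = "\<phi> n"
  have A: "M ?A ?A = ?A" using idm_phi[OF ia] by (simp add: idm_def)
  have "M (?A + ?N) (?A + ?N) = ?A + ?N" using idm_phi[OF i1] phi_add[OF a n] by (simp add: idm_def)
  then have e1: "(M ?A ?N + M ?N ?A) + M ?N ?N = ?N"
    by (simp add: M_add_left M_add_right A algebra_simps)
  have "M (?A - ?N) (?A - ?N) = ?A - ?N" using idm_phi[OF i2] phi_diff[OF a n] by (simp add: idm_def)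
  then have e2: "- (M ?A ?N + M ?N ?A) + M ?N ?N = - ?N"
    by (simp add: M_diff_left M_diff_right A algebra_simps)
  have "((M ?A ?N + M ?N ?A) + M ?N ?N) + (- (M ?A ?N + M ?N ?A) + M ?N ?N) = ?N + - ?N"
    by (simp only: e1 e2)
  then have "M ?N ?N + M ?N ?N = 0" by (simp add: algebra_simps)
  then show n2: "M ?N ?N = 0" by (rule two_cancel[OF two])
  show "M ?A ?N + M ?N ?A = ?N" using e1 n2 by simp
qed

lemma J2:
  assumes a: "a \<in> inc_alg X" and b: "b \<in> inc_alg X" and ia: "idm a" and ib: "idm b" and iab: "idm (a + b)"
  shows "M (\<phi> a) (\<phi> b) + M (\<phi> b) (\<phi> a) = 0"
proof -
  have A: "M (\<phi> a) (\<phi> a) = \<phi> a" using idm_phi[OF ia] by (simp add: idm_def)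
  have B: "M (\<phi> b) (\<phi> b) = \<phi> b" using idm_phi[OF ib] by (simp add: idm_def)
  have "M (\<phi> a + \<phi> b) (\<phi> a + \<phi> b) = \<phi> a + \<phi> b" using idm_phi[OF iab] phi_add[OF a b] by (simp add: idm_def)
  then show ?thesis by (simp add: M_add_left M_add_right A B algebra_simps)
qed

lemma orth:
  assumes E: "M e e = e" and F: "M f f = f" and h: "M e f + M f e = 0"
  shows "M e f = 0"
proof -
  have fe: "M f e = - M e f" using h by (simp add: eq_neg_iff_add_eq_0 add.commute)
  have ef: "M e f = - M f e" using h by (simp add: eq_neg_iff_add_eq_0)
  have "M (M e f) e = M (- M f e) e" by (simp only: ef)
  also have "\<dots> = - M (M f e) e" by (rule M_minus_left)
  also have "\<dots> = - M f (M e e)" by (simp only: M_assoc[OF fin])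
  also have "\<dots> = M e f" by (simp only: E ef minus_minus)
  finally have l: "M (M e f) e = M e f" .
  have "M e (M f e) = M e (- M e f)" by (simp only: fe)
  also have "\<dots> = - M e (M e f)" by (rule M_minus_right)
  also have "\<dots> = - M (M e e) f" by (simp only: M_assoc[OF fin])
  also have "\<dots> = - M e f" by (simp only: E)
  finally have r: "M e (M f e) = - M e f" .
  have "M e f = - M e f" using l r M_assoc[OF fin, of e f e] by simp
  then have "M e f + M e f = 0" by (simp add: eq_neg_iff_add_eq_0)
  then show ?thesis by (rule two_cancel[OF two])
qed

lemma EE_same: "p \<in> X \<Longrightarrow> q \<in> X \<Longrightarrow> p \<le> q \<Longrightarrow> q \<le> s \<Longrightarrow> M (Eb p q) (Eb q s) = Eb p s"
  using M_Eb[OF fin, of p q q s] by simp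

lemma EE_zero: "p \<in> X \<Longrightarrow> q \<in> X \<Longrightarrow> p \<le> q \<Longrightarrow> r \<le> s \<Longrightarrow> q \<noteq> r \<Longrightarrow> M (Eb p q) (Eb r s) = 0"
  using M_Eb[OF fin, of p q r s] by simp

lemma idm_Ebpp: "p \<in> X \<Longrightarrow> idm (Eb p p)"
  unfolding idm_def using EE_same[of p p p] by (simp add: inc_alg_Eb)

lemma idm_one: "idm (one_inc X)"
  unfolding idm_def using fin by (simp add: inc_alg_one M_one_left)

lemma idm_compl: "idm e \<Longrightarrow> idm (one_inc X - e)"
  unfolding idm_def using fin
  by (simp add: inc_alg_one inc_alg_diff M_diff_left M_diff_right M_one_left M_one_right)

lemma idm_two: assumes p: "p \<in> X" and q: "q \<in> X" and h: "p \<noteq> q" shows "idm (Eb p p + Eb q q)"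
proof -
  have m1: "M (Eb p p) (Eb p p) = Eb p p" using EE_same[OF p p] by simp
  have m2: "M (Eb q q) (Eb q q) = Eb q q" using EE_same[OF q q] by simp
  have m3: "M (Eb p p) (Eb q q) = 0" using EE_zero[OF p p] h by simp
  have m4: "M (Eb q q) (Eb p p) = 0" using EE_zero[OF q q] h by simp
  show ?thesis unfolding idm_def
    by (simp only: inc_alg_add inc_alg_Eb[OF p p order_refl] inc_alg_Eb[OF q q order_refl]
       M_add_left M_add_right m1 m2 m3 m4 simp_thms, simp add: algebra_simps)
qed

lemma idm_row:
  assumes p: "p \<in> X" and q: "q \<in> X" and pq: "p < q"
  shows "idm (Eb p p + Eb p q)" "idm (Eb p p - Eb p q)" "idm (Eb q q + Eb p q)" "idm (Eb q q - Eb p q)"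
proof -
  have h: "p \<le> q" "p \<noteq> q" "q \<noteq> p" using pq by auto
  have m1: "M (Eb p p) (Eb p p) = Eb p p" using EE_same[OF p p] by simp
  have m2: "M (Eb p p) (Eb p q) = Eb p q" using EE_same[OF p p] h by simp
  have m3: "M (Eb p q) (Eb p p) = 0" using EE_zero[OF p q] h by simp
  have m4: "M (Eb p q) (Eb p q) = 0" using EE_zero[OF p q] h by simp
  have m5: "M (Eb q q) (Eb q q) = Eb q q" using EE_same[OF q q] by simp
  have m6: "M (Eb q q) (Eb p q) = 0" using EE_zero[OF q q] h by simp
  have m7: "M (Eb p q) (Eb q q) = Eb p q" using EE_same[OF p q] h by simp
  have i: "Eb p p \<in> inc_alg X" "Eb p q \<in> inc_alg X" "Eb q q \<in> inc_alg X"
    using inc_alg_Eb p q h by auto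
  show "idm (Eb p p + Eb p q)" "idm (Eb p p - Eb p q)" "idm (Eb q q + Eb p q)" "idm (Eb q q - Eb p q)"
    unfolding idm_def
    by (simp_all only: inc_alg_add inc_alg_diff i M_add_left M_add_right M_diff_left M_diff_right
        m1 m2 m3 m4 m5 m6 m7 simp_thms, simp_all add: algebra_simps)
qed

end

context setting
begin

lemma mem_PX: "(a, b) \<in> PX X \<longleftrightarrow> a \<in> X \<and> b \<in> X \<and> a \<le> b"
  unfolding PX_def by simp

definition fp :: "'a \<Rightarrow> 'a \<Rightarrow> 'a \<Rightarrow> 'b" where "fp p = \<phi> (Eb p p)"
definition G :: "'a \<Rightarrow> 'a \<Rightarrow> 'a \<Rightarrow> 'a \<Rightarrow> 'b" where "G p q = \<phi> (Eb p q)"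
definition P1 where "P1 = \<phi> (one_inc X)"
definition Rr where "Rr b \<longleftrightarrow> M b P1 + M P1 b = b + b"

lemma Eb_alg: "p \<in> X \<Longrightarrow> q \<in> X \<Longrightarrow> p \<le> q \<Longrightarrow> Eb p q \<in> inc_alg X"
  by (rule inc_alg_Eb)

lemma fp_idem: "p \<in> X \<Longrightarrow> M (fp p) (fp p) = fp p"
  using idm_phi[OF idm_Ebpp] unfolding fp_def idm_def by blast

lemma fp_alg: "p \<in> X \<Longrightarrow> fp p \<in> inc_alg X"
  unfolding fp_def by (rule into[OF Eb_alg]) auto

lemma G_alg: "p \<in> X \<Longrightarrow> q \<in> X \<Longrightarrow> p \<le> q \<Longrightarrow> G p q \<in> inc_alg X"
  unfolding G_def by (rule into[OF Eb_alg])

lemma fp_orth: "p \<in> X \<Longrightarrow> q \<in> X \<Longrightarrow> p \<noteq> q \<Longrightarrow> M (fp p) (fp q) = 0"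
  unfolding fp_def
  apply (rule orth)
    apply (rule fp_idem[unfolded fp_def], assumption)
   apply (rule fp_idem[unfolded fp_def], assumption)
  apply (rule J2)
      apply (auto intro: Eb_alg idm_Ebpp idm_two)
  done

lemma Rr_idm: assumes a: "a \<in> inc_alg X" and ia: "idm a" shows "Rr (\<phi> a)"
proof -
  have c: "one_inc X - a \<in> inc_alg X" by (rule inc_alg_diff[OF inc_alg_one a])
  have "idm (a + (one_inc X - a))" using idm_one by simp
  then have j: "M (\<phi> a) (\<phi> (one_inc X - a)) + M (\<phi> (one_inc X - a)) (\<phi> a) = 0"
    by (rule J2[OF a c ia idm_compl[OF ia]])
  have A: "M (\<phi> a) (\<phi> a) = \<phi> a" using idm_phi[OF ia] by (simp add: idm_def)
  have e: "\<phi> (one_inc X - a) = P1 - \<phi> a" unfolding P1_def by (rule phi_diff[OF inc_alg_one a])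
  have "M (\<phi> a) P1 - M (\<phi> a) (\<phi> a) + (M P1 (\<phi> a) - M (\<phi> a) (\<phi> a)) = 0"
    using j unfolding e by (simp only: M_diff_left M_diff_right)
  then show ?thesis unfolding Rr_def A by (simp add: algebra_simps)
qed

lemma Rr_diff: "Rr a \<Longrightarrow> Rr b \<Longrightarrow> Rr (a - b)"
  unfolding Rr_def by (simp add: M_diff_left M_diff_right algebra_simps)

lemma Rr_sc: "Rr a \<Longrightarrow> Rr (sc c a)"
proof -
  assume r: "Rr a"
  have "sc c (M a P1 + M P1 a) = sc c (a + a)" using r unfolding Rr_def by simp
  then show ?thesis unfolding Rr_def M_sc_left M_sc_right by (simp add: sc_def fun_eq_iff algebra_simps)
qed

lemma Rr_sum: "(\<And>i. i \<in> I \<Longrightarrow> Rr (F i)) \<Longrightarrow> Rr (sum F I)"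
proof -
  assume r: "\<And>i. i \<in> I \<Longrightarrow> Rr (F i)"
  have "M (sum F I) P1 + M P1 (sum F I) = (\<Sum>i\<in>I. M (F i) P1 + M P1 (F i))"
    by (simp only: M_sum_left M_sum_right sum.distrib)
  also have "\<dots> = (\<Sum>i\<in>I. F i + F i)" using r unfolding Rr_def by (simp only: cong: sum.cong)
  also have "\<dots> = sum F I + sum F I" by (simp only: sum.distrib)
  finally show ?thesis unfolding Rr_def .
qed

lemma Rr_G: assumes p: "p \<in> X" and q: "q \<in> X" and pq: "p \<le> q" shows "Rr (G p q)"
proof (cases "p = q")
  case True
  then show ?thesis unfolding G_def using Rr_idm[OF Eb_alg[OF p p order_refl] idm_Ebpp[OF p]] by simp
next
  case False
  then have lt: "p < q" using pq by simp
  have a1: "Eb p p + Eb p q \<in> inc_alg X" by (rule inc_alg_add[OF Eb_alg[OF p p order_refl] Eb_alg[OF p q pq]])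
  have r1: "Rr (\<phi> (Eb p p + Eb p q))" by (rule Rr_idm[OF a1 idm_row(1)[OF p q lt]])
  have r2: "Rr (\<phi> (Eb p p))" by (rule Rr_idm[OF Eb_alg[OF p p order_refl] idm_Ebpp[OF p]])
  have eq: "G p q = \<phi> (Eb p p + Eb p q) - \<phi> (Eb p p)"
    unfolding G_def phi_add[OF Eb_alg[OF p p order_refl] Eb_alg[OF p q pq]] by (simp add: algebra_simps)
  show ?thesis unfolding eq by (rule Rr_diff[OF r1 r2])
qed

lemma P1_one: "P1 = one_inc X"
proof -
  have "one_inc X \<in> \<phi> ` inc_alg X" unfolding surj by (rule inc_alg_one)
  then obtain f where f: "f \<in> inc_alg X" "\<phi> f = one_inc X" by (elim imageE) simp
  have d: "\<phi> f = (\<Sum>pq\<in>PX X. sc (f (fst pq) (snd pq)) (G (fst pq) (snd pq)))"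
  proof -
    have "\<phi> f = \<phi> (\<Sum>pq\<in>PX X. sc (f (fst pq) (snd pq)) (Eb (fst pq) (snd pq)))"
      using decomp[OF fin fin f(1)] by simp
    also have "\<dots> = (\<Sum>pq\<in>PX X. \<phi> (sc (f (fst pq) (snd pq)) (Eb (fst pq) (snd pq))))"
      by (rule phi_sum) (auto simp: mem_PX intro!: inc_alg_sc Eb_alg)
    also have "\<dots> = (\<Sum>pq\<in>PX X. sc (f (fst pq) (snd pq)) (G (fst pq) (snd pq)))"
      by (rule sum.cong[OF refl]) (auto simp: mem_PX G_def intro!: phi_sc Eb_alg)
    finally show ?thesis .
  qed
  have "Rr (\<phi> f)" unfolding d
    by (rule Rr_sum, rule Rr_sc, rule Rr_G) (auto simp: mem_PX)
  then have "M (one_inc X) P1 + M P1 (one_inc X) = one_inc X + one_inc X" unfolding Rr_def f(2) .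
  moreover have Pa: "P1 \<in> inc_alg X" unfolding P1_def by (rule into[OF inc_alg_one])
  moreover have "M (one_inc X) P1 = P1" by (rule M_one_left[OF fin Pa])
  moreover have "M P1 (one_inc X) = P1" by (rule M_one_right[OF fin Pa])
  ultimately have "P1 + P1 = one_inc X + one_inc X" by (simp only:)
  then have "(P1 - one_inc X) + (P1 - one_inc X) = 0" by (simp add: algebra_simps)
  then have "P1 - one_inc X = 0" by (rule two_cancel[OF two])
  then show ?thesis by simp
qed

lemma sum_fp: "(\<Sum>p\<in>X. fp p) = one_inc X"
proof -
  have "one_inc X = \<phi> (one_inc X)" using P1_one unfolding P1_def by simp
  also have "\<dots> = \<phi> (\<Sum>p\<in>X. Eb p p)" by (subst one_decomp[OF fin]) (rule refl)
  also have "\<dots> = (\<Sum>p\<in>X. fp p)" unfolding fp_def by (rule phi_sum) (auto intro: Eb_alg)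
  finally show ?thesis by simp
qed

end

lemma M_diag: "x \<in> X \<Longrightarrow> inc_mult X g h x x = g x x * h x x"
proof -
  assume x: "x \<in> X"
  have "{z \<in> X. x \<le> z \<and> z \<le> x} = {x}" using x by (auto intro: order.antisym)
  then show ?thesis unfolding inc_mult_def by simp
qed

lemma supp:
  fixes e :: "'a::order \<Rightarrow> 'a \<Rightarrow> 'b::field"
  assumes fin: "finite X" and e: "e \<in> inc_alg X" and ee: "inc_mult X e e = e"
  shows "e p q \<noteq> 0 \<Longrightarrow> \<exists>s. p \<le> s \<and> s \<le> q \<and> e s s \<noteq> 0"
proof -
  have "\<forall>p q. card {z \<in> X. p \<le> z \<and> z \<le> q} = n \<longrightarrow> e p q \<noteq> 0 \<longrightarrow> (\<exists>s. p \<le> s \<and> s \<le> q \<and> e s s \<noteq> 0)" for n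
  proof (induction n rule: less_induct)
    case (less n)
    show ?case
    proof (intro allI impI)
      fix p q assume cn: "card {z \<in> X. p \<le> z \<and> z \<le> q} = n" and nz: "e p q \<noteq> 0"
      show "\<exists>s. p \<le> s \<and> s \<le> q \<and> e s s \<noteq> 0"
      proof (rule ccontr)
        assume "\<not> (\<exists>s. p \<le> s \<and> s \<le> q \<and> e s s \<noteq> 0)"
        then have ds: "\<And>s. p \<le> s \<Longrightarrow> s \<le> q \<Longrightarrow> e s s = 0" by blast
        have pq: "p \<in> X" "q \<in> X" "p \<le> q" using nz e by (auto simp: inc_alg_def)
        have "e p t * e t q = 0" if t: "t \<in> {z \<in> X. p \<le> z \<and> z \<le> q}" for t
        proof (cases "t = p")
          case True then show ?thesis using ds pq by simp
        next
          case False
          have sub: "{z \<in> X. t \<le> z \<and> z \<le> q} \<subset> {z \<in> X. p \<le> z \<and> z \<le> q}"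
          proof -
            have "p \<notin> {z \<in> X. t \<le> z \<and> z \<le> q}" using t False by (auto dest: order.antisym)
            moreover have "p \<in> {z \<in> X. p \<le> z \<and> z \<le> q}" using pq by auto
            moreover have "{z \<in> X. t \<le> z \<and> z \<le> q} \<subseteq> {z \<in> X. p \<le> z \<and> z \<le> q}"
              using t by (auto intro: order.trans)
            ultimately show ?thesis by blast
          qed
          have "card {z \<in> X. t \<le> z \<and> z \<le> q} < n"
            using psubset_card_mono[OF _ sub] fin cn by simp
          then have "e t q = 0"
            using less.IH[of "card {z \<in> X. t \<le> z \<and> z \<le> q}"] ds t by (auto intro: order.trans)
          then show ?thesis by simp
        qed
        then have "inc_mult X e e p q = 0" unfolding inc_mult_def by (simp add: sum.neutral)
        then show False using nz ee by simp
      qed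
    qed
  qed
  then show "e p q \<noteq> 0 \<Longrightarrow> \<exists>s. p \<le> s \<and> s \<le> q \<and> e s s \<noteq> 0" by blast
qed

lemma idem_zero_diag:
  fixes e :: "'a::order \<Rightarrow> 'a \<Rightarrow> 'b::field"
  assumes fin: "finite X" and e: "e \<in> inc_alg X" and ee: "inc_mult X e e = e"
    and d: "\<And>s. e s s = 0"
  shows "e = 0"
proof -
  have "e p q = 0" for p q using supp[OF fin e ee, of p q] d by blast
  then show ?thesis by (intro ext) simp
qed

context setting
begin

lemma fp_diag01: "p \<in> X \<Longrightarrow> fp p x x = 0 \<or> fp p x x = 1"
proof (cases "x \<in> X")
  case True
  assume p: "p \<in> X"
  have "fp p x x * fp p x x = fp p x x" using M_diag[OF True, of "fp p" "fp p"] fp_idem[OF p] by simp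
  then show ?thesis by (metis mult_cancel_right1 mult_zero_right)
next
  case False
  assume p: "p \<in> X"
  then show ?thesis using fp_alg[OF p] False by (auto simp: inc_alg_def)
qed

lemma fp_diag_orth: "p \<in> X \<Longrightarrow> q \<in> X \<Longrightarrow> p \<noteq> q \<Longrightarrow> fp p x x * fp q x x = 0"
proof (cases "x \<in> X")
  case True
  assume "p \<in> X" "q \<in> X" "p \<noteq> q"
  then show ?thesis using M_diag[OF True, of "fp p" "fp q"] fp_orth by simp
next
  case False
  assume p: "p \<in> X"
  then show ?thesis using fp_alg[OF p] False by (auto simp: inc_alg_def)
qed

lemma fp_diag_sum: "x \<in> X \<Longrightarrow> (\<Sum>p\<in>X. fp p x x) = 1"
  using fun_cong[OF fun_cong[OF sum_fp, of x], of x] by (simp add: sum_fun_apply2 one_inc_def)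

lemma Eb_nz: "Eb p q \<noteq> (0::'a \<Rightarrow> 'a \<Rightarrow> 'b)"
proof
  assume "Eb p q = (0::'a \<Rightarrow> 'a \<Rightarrow> 'b)"
  then have "Eb p q p q = (0::'b)" by simp
  then show False by (simp add: Eb_def)
qed

lemma phi_nz: "f \<in> inc_alg X \<Longrightarrow> f \<noteq> 0 \<Longrightarrow> \<phi> f \<noteq> 0"
  using inj phi_zero inc_alg_zero unfolding inj_on_def by metis

lemma fp_nz: "p \<in> X \<Longrightarrow> fp p \<noteq> 0"
  unfolding fp_def by (rule phi_nz[OF Eb_alg Eb_nz]) auto

lemma G_nz: "p \<in> X \<Longrightarrow> q \<in> X \<Longrightarrow> p \<le> q \<Longrightarrow> G p q \<noteq> 0"
  unfolding G_def by (rule phi_nz[OF Eb_alg Eb_nz])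

lemma fp_has_diag: "p \<in> X \<Longrightarrow> \<exists>x\<in>X. fp p x x \<noteq> 0"
proof (rule ccontr)
  assume p: "p \<in> X" and "\<not> (\<exists>x\<in>X. fp p x x \<noteq> 0)"
  then have "fp p s s = 0" for s using fp_alg[OF p] by (cases "s \<in> X") (auto simp: inc_alg_def)
  then have "fp p = 0" using idem_zero_diag[OF fin fp_alg[OF p] fp_idem[OF p]] by blast
  then show False using fp_nz[OF p] by simp
qed

definition tau where "tau x = (SOME p. p \<in> X \<and> fp p x x \<noteq> 0)"

lemma tau_ex: "x \<in> X \<Longrightarrow> \<exists>p\<in>X. fp p x x \<noteq> 0"
proof (rule ccontr)
  assume x: "x \<in> X" and "\<not> (\<exists>p\<in>X. fp p x x \<noteq> 0)"
  then have "(\<Sum>p\<in>X. fp p x x) = 0" by (simp add: sum.neutral)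
  then show False using fp_diag_sum[OF x] by simp
qed

lemma tau_prop: "x \<in> X \<Longrightarrow> tau x \<in> X \<and> fp (tau x) x x \<noteq> 0"
proof -
  assume x: "x \<in> X"
  have "\<exists>p. p \<in> X \<and> fp p x x \<noteq> 0" using tau_ex[OF x] by blast
  then show ?thesis unfolding tau_def by (rule someI_ex)
qed

lemma diag_unique: "x \<in> X \<Longrightarrow> p \<in> X \<Longrightarrow> q \<in> X \<Longrightarrow> fp p x x \<noteq> 0 \<Longrightarrow> fp q x x \<noteq> 0 \<Longrightarrow> p = q"
  using fp_diag_orth by fastforce

lemma tau_eq: "x \<in> X \<Longrightarrow> p \<in> X \<Longrightarrow> fp p x x \<noteq> 0 \<Longrightarrow> tau x = p"
  using tau_prop diag_unique by blast

lemma tau_surj: "tau ` X = X"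
proof
  show "tau ` X \<subseteq> X" using tau_prop by auto
  show "X \<subseteq> tau ` X"
  proof
    fix p assume p: "p \<in> X"
    obtain x where x: "x \<in> X" "fp p x x \<noteq> 0" using fp_has_diag[OF p] by blast
    then have "tau x = p" using tau_eq p by blast
    then show "p \<in> tau ` X" using x by blast
  qed
qed

lemma tau_inj: "inj_on tau X"
  by (rule eq_card_imp_inj_on[OF fin]) (simp add: tau_surj)

definition sig where "sig p = (SOME x. x \<in> X \<and> fp p x x \<noteq> 0)"

lemma sig_prop: "p \<in> X \<Longrightarrow> sig p \<in> X \<and> fp p (sig p) (sig p) \<noteq> 0"
proof -
  assume p: "p \<in> X"
  have "\<exists>x. x \<in> X \<and> fp p x x \<noteq> 0" using fp_has_diag[OF p] by blast
  then show ?thesis unfolding sig_def by (rule someI_ex)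
qed

lemma sig_unique: "p \<in> X \<Longrightarrow> fp p x x \<noteq> 0 \<Longrightarrow> x = sig p"
proof -
  assume p: "p \<in> X" and nz: "fp p x x \<noteq> 0"
  have x: "x \<in> X" using nz fp_alg[OF p] by (auto simp: inc_alg_def)
  have "tau x = p" using tau_eq[OF x p nz] .
  moreover have "tau (sig p) = p" using tau_eq sig_prop[OF p] p by blast
  ultimately show ?thesis using tau_inj x sig_prop[OF p] unfolding inj_on_def by metis
qed

lemma fp_diag: "p \<in> X \<Longrightarrow> fp p x x = (if x = sig p then 1 else 0)"
  using sig_unique fp_diag01 sig_prop by metis

lemma fp_supp: "p \<in> X \<Longrightarrow> fp p a b \<noteq> 0 \<Longrightarrow> a \<le> sig p \<and> sig p \<le> b"
  using supp[OF fin fp_alg fp_idem] sig_unique by metis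

end

context setting
begin

definition cor where "cor x y b \<longleftrightarrow> b \<in> inc_alg X \<and> M (fp x) (M b (fp y)) = b"

lemma cor_entry:
  assumes x: "x \<in> X" and y: "y \<in> X" and c: "cor x y b" and nz: "b a c \<noteq> 0"
  shows "\<exists>t s. fp x a t \<noteq> 0 \<and> b t s \<noteq> 0 \<and> fp y s c \<noteq> 0"
proof -
  have "M (fp x) (M b (fp y)) a c \<noteq> 0" using c nz unfolding cor_def by simp
  then have "(\<Sum>t\<in>{z \<in> X. a \<le> z \<and> z \<le> c}. fp x a t * M b (fp y) t c) \<noteq> 0"
    unfolding inc_mult_def[of X "fp x" "M b (fp y)"] .
  then obtain t where t: "fp x a t * M b (fp y) t c \<noteq> 0"
    by (rule sum.not_neutral_contains_not_neutral)
  then have "(\<Sum>s\<in>{z \<in> X. t \<le> z \<and> z \<le> c}. b t s * fp y s c) \<noteq> 0"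
    unfolding inc_mult_def[of X b "fp y"] by simp
  then obtain s where s: "b t s * fp y s c \<noteq> 0"
    by (rule sum.not_neutral_contains_not_neutral)
  show ?thesis using t s by (intro exI[of _ t] exI[of _ s]) simp
qed

lemma C1:
  assumes x: "x \<in> X" and y: "y \<in> X" and c: "cor x y b" and nz: "b a c \<noteq> 0"
  shows "a \<le> sig x \<and> sig y \<le> c"
  using cor_entry[OF x y c nz] fp_supp[OF x] fp_supp[OF y] by blast

lemma C2:
  assumes x: "x \<in> X" and y: "y \<in> X" and c: "cor x y b" and nz: "b \<noteq> 0"
  shows "b (sig x) (sig y) \<noteq> 0"
proof -
  obtain a d where "b a d \<noteq> 0" using nz by (metis ext zero_fun_apply)
  then obtain t s where ts: "fp x a t \<noteq> 0" "b t s \<noteq> 0" "fp y s d \<noteq> 0" using cor_entry[OF x y c] by blast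
  have "sig x \<le> t" using fp_supp[OF x ts(1)] by simp
  moreover have "t \<le> sig x" "sig y \<le> s" using C1[OF x y c ts(2)] by auto
  moreover have "s \<le> sig y" using fp_supp[OF y ts(3)] by simp
  ultimately have "t = sig x" "s = sig y" by (auto intro: order.antisym)
  then show ?thesis using ts(2) by simp
qed

lemma C3:
  assumes x: "x \<in> X" and y: "y \<in> X" and z: "z \<in> X"
    and ca: "cor x y a" and cb: "cor y z b" and na: "a \<noteq> 0" and nb: "b \<noteq> 0"
  shows "M a b \<noteq> 0"
proof -
  have a1: "a (sig x) (sig y) \<noteq> 0" by (rule C2[OF x y ca na])
  have b1: "b (sig y) (sig z) \<noteq> 0" by (rule C2[OF y z cb nb])
  have aa: "a \<in> inc_alg X" "b \<in> inc_alg X" using ca cb by (auto simp: cor_def)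
  have mem: "sig y \<in> {w \<in> X. sig x \<le> w \<and> w \<le> sig z}"
    using a1 b1 aa by (auto simp: inc_alg_def)
  have "M a b (sig x) (sig z) = (\<Sum>w\<in>{w \<in> X. sig x \<le> w \<and> w \<le> sig z}. if w = sig y then a (sig x) (sig y) * b (sig y) (sig z) else 0)"
    unfolding inc_mult_def
  proof (rule sum.cong[OF refl])
    fix w assume w: "w \<in> {w \<in> X. sig x \<le> w \<and> w \<le> sig z}"
    show "a (sig x) w * b w (sig z) = (if w = sig y then a (sig x) (sig y) * b (sig y) (sig z) else 0)"
    proof (cases "w = sig y")
      case True then show ?thesis by simp
    next
      case False
      have "a (sig x) w = 0 \<or> b w (sig z) = 0"
      proof (rule ccontr)
        assume "\<not> (a (sig x) w = 0 \<or> b w (sig z) = 0)"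
        then have "sig y \<le> w" "w \<le> sig y" using C1[OF x y ca] C1[OF y z cb] by auto
        then show False using False by (auto intro: order.antisym)
      qed
      then show ?thesis using False by auto
    qed
  qed
  also have "\<dots> = a (sig x) (sig y) * b (sig y) (sig z)" using mem fin by (simp add: sum.delta')
  finally have "M a b (sig x) (sig z) \<noteq> 0" using a1 b1 by simp
  then show ?thesis by (metis zero_fun_apply)
qed

end

context setting
begin

lemma J_row: assumes p: "p \<in> X" and q: "q \<in> X" and pq: "p < q"
  shows "M (G p q) (G p q) = 0"
    "M (fp p) (G p q) + M (G p q) (fp p) = G p q"
    "M (fp q) (G p q) + M (G p q) (fp q) = G p q"
proof -
  have le: "p \<le> q" using pq by simp
  have r: "idm (Eb p p + Eb p q)" "idm (Eb p p - Eb p q)" "idm (Eb q q + Eb p q)" "idm (Eb q q - Eb p q)"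
    using idm_row[OF p q pq] by auto
  note j1 = J1[OF Eb_alg[OF p p order_refl] Eb_alg[OF p q le] idm_Ebpp[OF p] r(1) r(2)]
  note j2 = J1[OF Eb_alg[OF q q order_refl] Eb_alg[OF p q le] idm_Ebpp[OF q] r(3) r(4)]
  show "M (G p q) (G p q) = 0" using j1(1) unfolding G_def .
  show "M (fp p) (G p q) + M (G p q) (fp p) = G p q" using j1(2) unfolding G_def fp_def .
  show "M (fp q) (G p q) + M (G p q) (fp q) = G p q" using j2(2) unfolding G_def fp_def .
qed

lemma idemL: "M e e = e \<Longrightarrow> M e (M e w) = M e w"
  using M_assoc[OF fin, of e e w] by simp
lemma zeroL: "M e f = 0 \<Longrightarrow> M e (M f w) = 0"
  using M_assoc[OF fin, of e f w] by (simp add: M_zero_left)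
lemma absL: "M e b = b \<Longrightarrow> M e (M b w) = M b w"
  using M_assoc[OF fin, of e b w] by simp
lemma absR: "M b c = b \<Longrightarrow> M b (M c w) = M b w"
  using M_assoc[OF fin, of b c w] by simp

lemma split_abs:
  assumes E: "M e e = e" and F: "M f f = f" and ef: "M e f = 0" and fe: "M f e = 0"
    and ge: "M e g + M g e = g" and gf: "M f g + M g f = g" and gg: "M g g = 0"
  shows "g = M e (M g f) + M f (M g e)"
    "M (M e (M g f)) (M f (M g e)) = 0" "M (M f (M g e)) (M e (M g f)) = 0"
proof -
  define u where "u = M e (M g f)"
  define v where "v = M f (M g e)"
  have eg: "M e g = u"
  proof -
    have "M e g = M e (M f g + M g f)" using gf by simp
    also have "\<dots> = M e (M f g) + M e (M g f)" by (rule M_add_right)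
    also have "\<dots> = u" unfolding u_def zeroL[OF ef] by simp
    finally show ?thesis .
  qed
  have gE: "M g e = v"
  proof -
    have "M g e = M (M f g + M g f) e" using gf by simp
    also have "\<dots> = M (M f g) e + M (M g f) e" by (rule M_add_left)
    also have "\<dots> = v" unfolding v_def M_assoc[OF fin] fe M_zero_right by simp
    finally show ?thesis .
  qed
  have g: "g = u + v" using ge eg gE by simp
  then show "g = M e (M g f) + M f (M g e)" unfolding u_def v_def .
  have ue: "M u e = 0" unfolding u_def M_assoc[OF fin] fe M_zero_right ..
  have vf: "M v f = 0" unfolding v_def M_assoc[OF fin] ef M_zero_right ..
  have uu: "M u u = 0"
  proof -
    have "M u u = M (M u e) (M g f)" unfolding u_def M_assoc[OF fin] ..
    then show ?thesis using ue by (simp add: M_zero_left)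
  qed
  have vv: "M v v = 0"
  proof -
    have "M v v = M (M v f) (M g e)" unfolding v_def M_assoc[OF fin] ..
    then show ?thesis using vf by (simp add: M_zero_left)
  qed
  have "M (u + v) (u + v) = 0" using gg g by simp
  then have s: "M u v + M v u = 0"
    unfolding M_add_left M_add_right uu vv by (simp add: algebra_simps)
  have eu: "M e u = u" unfolding u_def by (rule idemL[OF E])
  have ev: "M e v = 0" unfolding v_def by (rule zeroL[OF ef])
  have "M e (M u v + M v u) = M u v"
    unfolding M_add_right M_assoc[OF fin, symmetric] eu ev M_zero_left by simp
  then have uv: "M u v = 0" using s M_zero_right by metis
  then show "M (M e (M g f)) (M f (M g e)) = 0" unfolding u_def v_def .
  have "M v u = 0" using s uv by simp
  then show "M (M f (M g e)) (M e (M g f)) = 0" unfolding u_def v_def .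
qed

definition U where "U p q = M (fp p) (M (G p q) (fp q))"
definition V where "V p q = M (fp q) (M (G p q) (fp p))"

lemma UV: assumes p: "p \<in> X" and q: "q \<in> X" and pq: "p < q"
  shows "G p q = U p q + V p q" "M (U p q) (V p q) = 0" "M (V p q) (U p q) = 0"
proof -
  have ne: "p \<noteq> q" "q \<noteq> p" using pq by auto
  note s = split_abs[OF fp_idem[OF p] fp_idem[OF q] fp_orth[OF p q ne(1)] fp_orth[OF q p ne(2)]
      J_row(2)[OF p q pq] J_row(3)[OF p q pq] J_row(1)[OF p q pq]]
  show "G p q = U p q + V p q" "M (U p q) (V p q) = 0" "M (V p q) (U p q) = 0"
    using s unfolding U_def V_def by auto
qed

lemma cor_U: assumes p: "p \<in> X" and q: "q \<in> X" and pq: "p < q" shows "cor p q (U p q)"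
proof -
  have a: "U p q \<in> inc_alg X" unfolding U_def
    using G_alg[OF p q] pq fp_alg[OF p] fp_alg[OF q] by (auto intro!: inc_alg_M)
  have "M (fp p) (M (U p q) (fp q)) = U p q"
    unfolding U_def M_assoc[OF fin] idemL[OF fp_idem[OF p]] fp_idem[OF q] ..
  then show ?thesis using a unfolding cor_def by simp
qed

lemma cor_V: assumes p: "p \<in> X" and q: "q \<in> X" and pq: "p < q" shows "cor q p (V p q)"
proof -
  have a: "V p q \<in> inc_alg X" unfolding V_def
    using G_alg[OF p q] pq fp_alg[OF p] fp_alg[OF q] by (auto intro!: inc_alg_M)
  have "M (fp q) (M (V p q) (fp p)) = V p q"
    unfolding V_def M_assoc[OF fin] idemL[OF fp_idem[OF q]] fp_idem[OF p] ..
  then show ?thesis using a unfolding cor_def by simp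
qed

lemma UV_excl: assumes p: "p \<in> X" and q: "q \<in> X" and pq: "p < q"
  shows "(U p q = 0 \<and> V p q \<noteq> 0) \<or> (U p q \<noteq> 0 \<and> V p q = 0)"
proof -
  have "\<not> (U p q \<noteq> 0 \<and> V p q \<noteq> 0)"
    using C3[OF p q p cor_U[OF p q pq] cor_V[OF p q pq]] UV(2)[OF p q pq] by blast
  moreover have "\<not> (U p q = 0 \<and> V p q = 0)"
    using UV(1)[OF p q pq] G_nz[OF p q less_imp_le[OF pq]] by auto
  ultimately show ?thesis by blast
qed

end

context setting
begin

lemma cor_LR: "cor x y b \<Longrightarrow> M (fp x) b = b \<and> M b (fp y) = b" if "x \<in> X" "y \<in> X"
proof -
  assume c: "cor x y b"
  have e: "M (fp x) (M b (fp y)) = b" using c unfolding cor_def by simp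
  have "M (fp x) b = M (fp x) (M (fp x) (M b (fp y)))" using e by simp
  also have "\<dots> = b" unfolding idemL[OF fp_idem[OF that(1)]] by (rule e)
  finally have l: "M (fp x) b = b" .
  have "M b (fp y) = M (M (fp x) (M b (fp y))) (fp y)" using e by simp
  also have "\<dots> = b" unfolding M_assoc[OF fin] fp_idem[OF that(2)] by (rule e)
  finally show ?thesis using l by simp
qed

lemma UL: "p \<in> X \<Longrightarrow> q \<in> X \<Longrightarrow> p < q \<Longrightarrow> M (fp p) (U p q) = U p q"
  using cor_LR cor_U by blast
lemma UR: "p \<in> X \<Longrightarrow> q \<in> X \<Longrightarrow> p < q \<Longrightarrow> M (U p q) (fp q) = U p q"
  using cor_LR cor_U by blast
lemma VL: "p \<in> X \<Longrightarrow> q \<in> X \<Longrightarrow> p < q \<Longrightarrow> M (fp q) (V p q) = V p q"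
  using cor_LR cor_V by blast
lemma VR: "p \<in> X \<Longrightarrow> q \<in> X \<Longrightarrow> p < q \<Longrightarrow> M (V p q) (fp p) = V p q"
  using cor_LR cor_V by blast

lemma fpfp0: "a \<in> X \<Longrightarrow> b \<in> X \<Longrightarrow> a \<noteq> b \<Longrightarrow> M (fp a) (M (fp b) w) = 0"
  by (rule zeroL[OF fp_orth])

lemma fG_same: "p \<in> X \<Longrightarrow> q \<in> X \<Longrightarrow> p < q \<Longrightarrow> M (fp p) (G p q) = U p q \<and> M (fp q) (G p q) = V p q
   \<and> M (G p q) (fp q) = U p q \<and> M (G p q) (fp p) = V p q"
proof -
  assume p: "p \<in> X" and q: "q \<in> X" and pq: "p < q"
  have ne: "p \<noteq> q" "q \<noteq> p" using pq by auto
  have g: "G p q = U p q + V p q" by (rule UV(1)[OF p q pq])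
  have a: "M (fp p) (V p q) = 0"
    using VL[OF p q pq] fpfp0[OF p q ne(1), of "V p q"] by simp
  have b: "M (fp q) (U p q) = 0"
    using UL[OF p q pq] fpfp0[OF q p ne(2), of "U p q"] by simp
  have c: "M (V p q) (fp q) = 0"
    using VR[OF p q pq] M_assoc[OF fin, of "V p q" "fp p" "fp q"] fp_orth[OF p q ne(1)] M_zero_right
    by metis
  have d: "M (U p q) (fp p) = 0"
    using UR[OF p q pq] M_assoc[OF fin, of "U p q" "fp q" "fp p"] fp_orth[OF q p ne(2)] M_zero_right
    by metis
  show ?thesis unfolding g M_add_left M_add_right
    using UL[OF p q pq] UR[OF p q pq] VL[OF p q pq] VR[OF p q pq] a b c d by simp
qed

lemma fG_other: "p \<in> X \<Longrightarrow> q \<in> X \<Longrightarrow> p < q \<Longrightarrow> r \<in> X \<Longrightarrow> r \<noteq> p \<Longrightarrow> r \<noteq> q \<Longrightarrow>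
   M (fp r) (G p q) = 0 \<and> M (G p q) (fp r) = 0"
proof -
  assume p: "p \<in> X" and q: "q \<in> X" and pq: "p < q" and r: "r \<in> X" "r \<noteq> p" "r \<noteq> q"
  have g: "G p q = U p q + V p q" by (rule UV(1)[OF p q pq])
  have a: "M (fp r) (U p q) = 0" using UL[OF p q pq] fpfp0[OF r(1) p r(2), of "U p q"] by simp
  have b: "M (fp r) (V p q) = 0" using VL[OF p q pq] fpfp0[OF r(1) q r(3), of "V p q"] by simp
  have c: "M (U p q) (fp r) = 0"
    using UR[OF p q pq] M_assoc[OF fin, of "U p q" "fp q" "fp r"] fp_orth[OF q r(1)] r M_zero_right
    by metis
  have d: "M (V p q) (fp r) = 0"
    using VR[OF p q pq] M_assoc[OF fin, of "V p q" "fp p" "fp r"] fp_orth[OF p r(1)] r M_zero_right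
    by metis
  show ?thesis unfolding g M_add_left M_add_right using a b c d by simp
qed

end

context setting
begin

lemma chain_abs:
  assumes hf: "M f f = f" and hU: "M Ua Ua = 0" and hV: "M Va Va = 0" and hW: "M Wa Wa = 0"
    and fU: "M f Ua + M Ua f = Ua" and fV: "M f Va + M Va f = Va"
    and s1: "M (f + Ua + Va + Wa) (f + Ua + Va + Wa) = f + Ua + Va + Wa"
    and s2: "M (f - Ua - Va + Wa) (f - Ua - Va + Wa) = f - Ua - Va + Wa"
  shows "M f Wa + M Wa f + M Ua Va + M Va Ua = Wa"
proof -
  define T where "T = M f Wa + M Wa f + M Ua Va + M Va Ua"
  define L where "L = M Ua Wa + M Wa Ua"
  define N where "N = M Va Wa + M Wa Va"
  have "M (f + Ua + Va + Wa) (f + Ua + Va + Wa) = M f f + (M f Ua + M Ua f) + (M f Va + M Va f) + M Ua Ua + M Va Va + M Wa Wa + T + L + N"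
    unfolding T_def L_def N_def by (simp add: M_add_left M_add_right algebra_simps)
  then have "f + Ua + Va + Wa = f + Ua + Va + T + L + N" using s1 hf hU hV hW fU fV by simp
  then have w1: "Wa = T + L + N" by (simp add: algebra_simps)
  have "M (f - Ua - Va + Wa) (f - Ua - Va + Wa) = M f f - (M f Ua + M Ua f) - (M f Va + M Va f) + M Ua Ua + M Va Va + M Wa Wa + T - L - N"
    unfolding T_def L_def N_def by (simp add: M_add_left M_add_right M_diff_left M_diff_right algebra_simps)
  then have "f - Ua - Va + Wa = f - Ua - Va + T - L - N" using s2 hf hU hV hW fU fV by simp
  then have w2: "Wa = T - L - N" by (simp add: algebra_simps)
  have a: "T - Wa = - (L + N)" using w1 by (simp add: algebra_simps)
  have b: "T - Wa = L + N" using w2 by (simp add: algebra_simps)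
  have "L + N = - (L + N)" using a b by simp
  then have "(L + N) + (L + N) = 0" by (simp only: eq_neg_iff_add_eq_0)
  then have "L + N = 0" by (rule two_cancel[OF two])
  then have "T - Wa = 0" using b by simp
  then show ?thesis unfolding T_def by simp
qed

lemma chain_idm:
  assumes p: "p \<in> X" and q: "q \<in> X" and r: "r \<in> X" and pq: "p < q" and qr: "q < r"
  shows "idm (Eb q q + Eb p q + Eb q r + Eb p r)" "idm (Eb q q - Eb p q - Eb q r + Eb p r)"
proof -
  have pr: "p < r" using pq qr by simp
  have h: "p \<le> q" "q \<le> r" "p \<le> r" "p \<noteq> q" "q \<noteq> p" "q \<noteq> r" "r \<noteq> q" "p \<noteq> r" "r \<noteq> p"
    using pq qr pr by auto
  have m: "M (Eb q q) (Eb q q) = Eb q q" "M (Eb q q) (Eb p q) = 0" "M (Eb q q) (Eb q r) = Eb q r"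
    "M (Eb q q) (Eb p r) = 0"
    "M (Eb p q) (Eb q q) = Eb p q" "M (Eb p q) (Eb p q) = 0" "M (Eb p q) (Eb q r) = Eb p r"
    "M (Eb p q) (Eb p r) = 0"
    "M (Eb q r) (Eb q q) = 0" "M (Eb q r) (Eb p q) = 0" "M (Eb q r) (Eb q r) = 0" "M (Eb q r) (Eb p r) = 0"
    "M (Eb p r) (Eb q q) = 0" "M (Eb p r) (Eb p q) = 0" "M (Eb p r) (Eb q r) = 0" "M (Eb p r) (Eb p r) = 0"
    using EE_same[OF q q] EE_same[OF p q] EE_zero[OF q q] EE_zero[OF p q] EE_zero[OF q r] EE_zero[OF p r] h
    by auto
  have i: "Eb q q \<in> inc_alg X" "Eb p q \<in> inc_alg X" "Eb q r \<in> inc_alg X" "Eb p r \<in> inc_alg X"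
    using Eb_alg p q r h by auto
  show "idm (Eb q q + Eb p q + Eb q r + Eb p r)" "idm (Eb q q - Eb p q - Eb q r + Eb p r)"
    unfolding idm_def
    by (simp_all only: inc_alg_add inc_alg_diff i M_add_left M_add_right M_diff_left M_diff_right m simp_thms,
        simp_all add: algebra_simps)
qed

lemma V_idm:
  assumes p: "p \<in> X" and q: "q \<in> X" and r: "r \<in> X" and pq: "p < q" and pr: "p < r" and qr: "q \<noteq> r"
  shows "idm (Eb p p + (Eb p q + Eb p r))" "idm (Eb p p - (Eb p q + Eb p r))"
proof -
  have h: "p \<le> q" "p \<le> r" "p \<noteq> q" "q \<noteq> p" "q \<noteq> r" "r \<noteq> q" "p \<noteq> r" "r \<noteq> p"
    using pq pr qr by auto
  have m: "M (Eb p p) (Eb p p) = Eb p p" "M (Eb p p) (Eb p q) = Eb p q" "M (Eb p p) (Eb p r) = Eb p r"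
    "M (Eb p q) (Eb p p) = 0" "M (Eb p q) (Eb p q) = 0" "M (Eb p q) (Eb p r) = 0"
    "M (Eb p r) (Eb p p) = 0" "M (Eb p r) (Eb p q) = 0" "M (Eb p r) (Eb p r) = 0"
    using EE_same[OF p p] EE_zero[OF p q] EE_zero[OF p r] h by auto
  have i: "Eb p p \<in> inc_alg X" "Eb p q \<in> inc_alg X" "Eb p r \<in> inc_alg X"
    using Eb_alg p q r h by auto
  show "idm (Eb p p + (Eb p q + Eb p r))" "idm (Eb p p - (Eb p q + Eb p r))"
    unfolding idm_def
    by (simp_all only: inc_alg_add inc_alg_diff i M_add_left M_add_right M_diff_left M_diff_right m simp_thms,
        simp_all add: algebra_simps)
qed

lemma L_idm:
  assumes p: "p \<in> X" and q: "q \<in> X" and r: "r \<in> X" and pr: "p < r" and qr: "q < r" and pq: "p \<noteq> q"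
  shows "idm (Eb r r + (Eb p r + Eb q r))" "idm (Eb r r - (Eb p r + Eb q r))"
proof -
  have h: "p \<le> r" "q \<le> r" "p \<noteq> q" "q \<noteq> p" "q \<noteq> r" "r \<noteq> q" "p \<noteq> r" "r \<noteq> p"
    using pq pr qr by auto
  have m: "M (Eb r r) (Eb r r) = Eb r r" "M (Eb r r) (Eb p r) = 0" "M (Eb r r) (Eb q r) = 0"
    "M (Eb p r) (Eb r r) = Eb p r" "M (Eb p r) (Eb p r) = 0" "M (Eb p r) (Eb q r) = 0"
    "M (Eb q r) (Eb r r) = Eb q r" "M (Eb q r) (Eb p r) = 0" "M (Eb q r) (Eb q r) = 0"
    using EE_same[OF r r] EE_same[OF p r] EE_same[OF q r] EE_zero[OF r r] EE_zero[OF p r] EE_zero[OF q r] h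
    by auto
  have i: "Eb r r \<in> inc_alg X" "Eb p r \<in> inc_alg X" "Eb q r \<in> inc_alg X"
    using Eb_alg p q r h by auto
  show "idm (Eb r r + (Eb p r + Eb q r))" "idm (Eb r r - (Eb p r + Eb q r))"
    unfolding idm_def
    by (simp_all only: inc_alg_add inc_alg_diff i M_add_left M_add_right M_diff_left M_diff_right m simp_thms,
        simp_all add: algebra_simps)
qed

end

context setting
begin

lemma G_anti:
  assumes a: "a \<in> inc_alg X" and n1: "n1 \<in> inc_alg X" and n2: "n2 \<in> inc_alg X" and ia: "idm a"
    and i1: "idm (a + (n1 + n2))" and i2: "idm (a - (n1 + n2))"
    and z1: "M (\<phi> n1) (\<phi> n1) = 0" and z2: "M (\<phi> n2) (\<phi> n2) = 0"
  shows "M (\<phi> n1) (\<phi> n2) + M (\<phi> n2) (\<phi> n1) = 0"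
proof -
  have "M (\<phi> (n1 + n2)) (\<phi> (n1 + n2)) = 0" by (rule J1(1)[OF a inc_alg_add[OF n1 n2] ia i1 i2])
  then have "M (\<phi> n1 + \<phi> n2) (\<phi> n1 + \<phi> n2) = 0" unfolding phi_add[OF n1 n2] .
  then show ?thesis unfolding M_add_left M_add_right z1 z2 by (simp add: algebra_simps)
qed

lemma Vshape: assumes p: "p \<in> X" and q: "q \<in> X" and r: "r \<in> X" and pq: "p < q" and pr: "p < r" and qr: "q \<noteq> r"
  shows "M (V p q) (U p r) = 0"
proof -
  have s: "M (G p q) (G p r) + M (G p r) (G p q) = 0"
    using G_anti[OF Eb_alg[OF p p order_refl] Eb_alg[OF p q] Eb_alg[OF p r] idm_Ebpp[OF p]
        V_idm[OF p q r pq pr qr]] J_row(1)[OF p q pq] J_row(1)[OF p r pr] pq pr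
    unfolding G_def by auto
  have "0 = M (fp q) (M (M (G p q) (G p r) + M (G p r) (G p q)) (fp r))"
    unfolding s M_zero_left M_zero_right ..
  also have "\<dots> = M (M (fp q) (G p q)) (M (G p r) (fp r)) + M (M (fp q) (G p r)) (M (G p q) (fp r))"
    by (simp only: M_add_left M_add_right M_assoc[OF fin])
  also have "\<dots> = M (V p q) (U p r)"
    using fG_same[OF p q pq] fG_same[OF p r pr] fG_other[OF p r pr q] qr pq by (simp add: M_zero_left)
  finally show ?thesis by simp
qed

lemma Lshape: assumes p: "p \<in> X" and q: "q \<in> X" and r: "r \<in> X" and pr: "p < r" and qr: "q < r" and pq: "p \<noteq> q"
  shows "M (U p r) (V q r) = 0"
proof -
  have s: "M (G p r) (G q r) + M (G q r) (G p r) = 0"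
    using G_anti[OF Eb_alg[OF r r order_refl] Eb_alg[OF p r] Eb_alg[OF q r] idm_Ebpp[OF r]
        L_idm[OF p q r pr qr pq]] J_row(1)[OF p r pr] J_row(1)[OF q r qr] pr qr
    unfolding G_def by auto
  have "0 = M (fp p) (M (M (G p r) (G q r) + M (G q r) (G p r)) (fp q))"
    unfolding s M_zero_left M_zero_right ..
  also have "\<dots> = M (M (fp p) (G p r)) (M (G q r) (fp q)) + M (M (fp p) (G q r)) (M (G p r) (fp q))"
    by (simp only: M_add_left M_add_right M_assoc[OF fin])
  also have "\<dots> = M (U p r) (V q r)"
    using fG_same[OF p r pr] fG_same[OF q r qr] fG_other[OF q r qr p] pq pr by (simp add: M_zero_left)
  finally show ?thesis by simp
qed

lemma chain_G: assumes p: "p \<in> X" and q: "q \<in> X" and r: "r \<in> X" and pq: "p < q" and qr: "q < r"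
  shows "G p r = M (G p q) (G q r) + M (G q r) (G p q)"
proof -
  have pr: "p < r" using pq qr by simp
  have h: "p \<le> q" "q \<le> r" "p \<le> r" using pq qr pr by auto
  have i: "Eb q q \<in> inc_alg X" "Eb p q \<in> inc_alg X" "Eb q r \<in> inc_alg X" "Eb p r \<in> inc_alg X"
    using Eb_alg p q r h by auto
  have e1: "\<phi> (Eb q q + Eb p q + Eb q r + Eb p r) = fp q + G p q + G q r + G p r"
    unfolding fp_def G_def
    by (simp only: phi_add inc_alg_add i)
  have e2: "\<phi> (Eb q q - Eb p q - Eb q r + Eb p r) = fp q - G p q - G q r + G p r"
    unfolding fp_def G_def
    by (simp only: phi_add phi_diff inc_alg_add inc_alg_diff i)
  have s1: "M (fp q + G p q + G q r + G p r) (fp q + G p q + G q r + G p r) = fp q + G p q + G q r + G p r"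
    using idm_phi[OF chain_idm(1)[OF p q r pq qr]] unfolding e1 idm_def by blast
  have s2: "M (fp q - G p q - G q r + G p r) (fp q - G p q - G q r + G p r) = fp q - G p q - G q r + G p r"
    using idm_phi[OF chain_idm(2)[OF p q r pq qr]] unfolding e2 idm_def by blast
  have k: "M (fp q) (G p r) + M (G p r) (fp q) + M (G p q) (G q r) + M (G q r) (G p q) = G p r"
    by (rule chain_abs[OF fp_idem[OF q] J_row(1)[OF p q pq] J_row(1)[OF q r qr] J_row(1)[OF p r pr]
        J_row(3)[OF p q pq] J_row(2)[OF q r qr] s1 s2])
  have "M (fp q) (G p r) = 0" "M (G p r) (fp q) = 0" using fG_other[OF p r pr q] pq qr by auto
  then show ?thesis using k by simp
qed

lemma chain_U: assumes p: "p \<in> X" and q: "q \<in> X" and r: "r \<in> X" and pq: "p < q" and qr: "q < r"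
  shows "U p r = M (U p q) (U q r)"
proof -
  have pr: "p < r" using pq qr by simp
  have "U p r = M (fp p) (M (G p r) (fp r))" unfolding U_def ..
  also have "\<dots> = M (fp p) (M (M (G p q) (G q r)) (fp r)) + M (fp p) (M (M (G q r) (G p q)) (fp r))"
    unfolding chain_G[OF p q r pq qr] M_add_left M_add_right ..
  also have "\<dots> = M (M (fp p) (G p q)) (M (G q r) (fp r)) + M (M (fp p) (G q r)) (M (G p q) (fp r))"
    by (simp only: M_assoc[OF fin])
  also have "\<dots> = M (U p q) (U q r)"
    using fG_same[OF p q pq] fG_same[OF q r qr] fG_other[OF q r qr p] pq pr by (simp add: M_zero_left)
  finally show ?thesis .
qed

lemma chain_V: assumes p: "p \<in> X" and q: "q \<in> X" and r: "r \<in> X" and pq: "p < q" and qr: "q < r"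
  shows "V p r = M (V q r) (V p q)"
proof -
  have pr: "p < r" using pq qr by simp
  have "V p r = M (fp r) (M (G p r) (fp p))" unfolding V_def ..
  also have "\<dots> = M (fp r) (M (M (G p q) (G q r)) (fp p)) + M (fp r) (M (M (G q r) (G p q)) (fp p))"
    unfolding chain_G[OF p q r pq qr] M_add_left M_add_right ..
  also have "\<dots> = M (M (fp r) (G p q)) (M (G q r) (fp p)) + M (M (fp r) (G q r)) (M (G p q) (fp p))"
    by (simp only: M_assoc[OF fin])
  also have "\<dots> = M (V q r) (V p q)"
    using fG_same[OF p q pq] fG_same[OF q r qr] fG_other[OF p q pq r] qr pr by (simp add: M_zero_left)
  finally show ?thesis .
qed

end

context setting
begin

definition fw where "fw p q \<longleftrightarrow> V p q = 0"

lemma fw_U: "p \<in> X \<Longrightarrow> q \<in> X \<Longrightarrow> p < q \<Longrightarrow> fw p q \<longleftrightarrow> U p q \<noteq> 0"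
  using UV_excl unfolding fw_def by blast

lemma share_chain: assumes p: "p \<in> X" and q: "q \<in> X" and r: "r \<in> X" and pq: "p < q" and qr: "q < r"
  shows "(fw p q \<longleftrightarrow> fw q r) \<and> (fw p q \<longleftrightarrow> fw p r)"
proof -
  have pr: "p < r" using pq qr by simp
  note cu = chain_U[OF p q r pq qr] and cv = chain_V[OF p q r pq qr]
  note e1 = UV_excl[OF p q pq] and e2 = UV_excl[OF q r qr] and e3 = UV_excl[OF p r pr]
  have "fw p q \<longleftrightarrow> fw q r"
  proof
    assume a: "fw p q"
    show "fw q r"
    proof (rule ccontr)
      assume "\<not> fw q r"
      then have "U q r = 0" using e2 unfolding fw_def by blast
      moreover have "V p q = 0" using a unfolding fw_def .
      ultimately have "U p r = 0" "V p r = 0" using cu cv by (simp_all add: M_zero_left M_zero_right)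
      then show False using e3 by blast
    qed
  next
    assume a: "fw q r"
    show "fw p q"
    proof (rule ccontr)
      assume "\<not> fw p q"
      then have "U p q = 0" using e1 unfolding fw_def by blast
      moreover have "V q r = 0" using a unfolding fw_def .
      ultimately have "U p r = 0" "V p r = 0" using cu cv by (simp_all add: M_zero_left M_zero_right)
      then show False using e3 by blast
    qed
  qed
  moreover have "fw p q \<longleftrightarrow> fw p r"
  proof
    assume "fw p q"
    then have "V p q = 0" unfolding fw_def .
    then show "fw p r" using cv unfolding fw_def by (simp add: M_zero_right)
  next
    assume a: "fw p r"
    show "fw p q"
    proof (rule ccontr)
      assume n: "\<not> fw p q"
      then have "U p q = 0" using e1 unfolding fw_def by blast
      then have "U p r = 0" using cu by (simp add: M_zero_left)
      then show False using a e3 unfolding fw_def by blast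
    qed
  qed
  ultimately show ?thesis by blast
qed

lemma share_V: assumes p: "p \<in> X" and q: "q \<in> X" and r: "r \<in> X" and pq: "p < q" and pr: "p < r"
  shows "fw p q \<longleftrightarrow> fw p r"
proof (cases "q = r")
  case True then show ?thesis by simp
next
  case False
  have a: "\<not> (V p q \<noteq> 0 \<and> U p r \<noteq> 0)"
    using C3[OF q p r cor_V[OF p q pq] cor_U[OF p r pr]] Vshape[OF p q r pq pr False] by blast
  have b: "\<not> (V p r \<noteq> 0 \<and> U p q \<noteq> 0)"
    using C3[OF r p q cor_V[OF p r pr] cor_U[OF p q pq]] Vshape[OF p r q pr pq] False by blast
  show ?thesis using a b UV_excl[OF p q pq] UV_excl[OF p r pr] unfolding fw_def by blast
qed

lemma share_L: assumes p: "p \<in> X" and q: "q \<in> X" and r: "r \<in> X" and pr: "p < r" and qr: "q < r"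
  shows "fw p r \<longleftrightarrow> fw q r"
proof (cases "p = q")
  case True then show ?thesis by simp
next
  case False
  have a: "\<not> (U p r \<noteq> 0 \<and> V q r \<noteq> 0)"
    using C3[OF p r q cor_U[OF p r pr] cor_V[OF q r qr]] Lshape[OF p q r pr qr False] by blast
  have b: "\<not> (U q r \<noteq> 0 \<and> V p r \<noteq> 0)"
    using C3[OF q r p cor_U[OF q r qr] cor_V[OF p r pr]] Lshape[OF q p r qr pr] False by blast
  show ?thesis using a b UV_excl[OF p r pr] UV_excl[OF q r qr] unfolding fw_def by blast
qed

definition good where "good z \<longleftrightarrow> (\<forall>w\<in>X. (z < w \<longrightarrow> fw z w) \<and> (w < z \<longrightarrow> fw w z))"

lemma good_from_pair: assumes a: "a \<in> X" and b: "b \<in> X" and ab: "a < b" and f: "fw a b"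
  shows "good a" "good b"
proof -
  show "good a" unfolding good_def
  proof (intro ballI conjI impI)
    fix w assume w: "w \<in> X"
    show "fw a w" if "a < w" using share_V[OF a b w ab that] f by simp
    show "fw w a" if "w < a" using share_chain[OF w a b that ab] f by simp
  qed
  show "good b" unfolding good_def
  proof (intro ballI conjI impI)
    fix w assume w: "w \<in> X"
    show "fw b w" if "b < w" using share_chain[OF a b w ab that] f by simp
    show "fw w b" if "w < b" using share_L[OF a w b ab that] f by simp
  qed
qed

lemma good_step: assumes y: "y \<in> X" and z: "z \<in> X" and c: "y \<le> z \<or> z \<le> y" and g: "good y"
  shows "good z"
proof (cases "y = z")
  case True then show ?thesis using g by simp
next
  case False
  then have "y < z \<or> z < y" using c by auto
  then show ?thesis
  proof
    assume yz: "y < z"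
    then have "fw y z" using g z unfolding good_def by blast
    then show ?thesis using good_from_pair[OF y z yz] by blast
  next
    assume zy: "z < y"
    then have "fw z y" using g z unfolding good_def by blast
    then show ?thesis using good_from_pair[OF z y zy] by blast
  qed
qed

lemma good_prop:
  assumes conn: "connected_poset X" and a: "a \<in> X" and g: "good a" and c: "c \<in> X"
  shows "good c"
proof -
  let ?R = "\<lambda>a b. a \<in> X \<and> b \<in> X \<and> (a \<le> b \<or> b \<le> a)"
  have "?R\<^sup>*\<^sup>* a c" using conn a c unfolding connected_poset_def by blast
  then show ?thesis
  proof (induction rule: rtranclp_induct)
    case base then show ?case using g .
  next
    case (step y z) then show ?case using good_step by blast
  qed
qed

lemma dichotomy: assumes conn: "connected_poset X"
  shows "(\<forall>p\<in>X. \<forall>q\<in>X. p < q \<longrightarrow> V p q = 0) \<or> (\<forall>p\<in>X. \<forall>q\<in>X. p < q \<longrightarrow> U p q = 0)"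
proof (cases "\<exists>a\<in>X. \<exists>b\<in>X. a < b \<and> fw a b")
  case True
  then obtain a b where ab: "a \<in> X" "b \<in> X" "a < b" "fw a b" by blast
  have ga: "good a" using good_from_pair[OF ab] by blast
  have "fw p q" if "p \<in> X" "q \<in> X" "p < q" for p q
    using good_prop[OF conn ab(1) ga that(1)] that unfolding good_def by blast
  then show ?thesis unfolding fw_def by blast
next
  case False
  then show ?thesis using UV_excl unfolding fw_def by blast
qed

end

context setting
begin

lemma Gpp: "G p p = fp p" unfolding G_def fp_def ..

lemma basis_hom:
  assumes all: "\<forall>p\<in>X. \<forall>q\<in>X. p < q \<longrightarrow> V p q = 0"
    and p: "p \<in> X" and q: "q \<in> X" and r: "r \<in> X" and s: "s \<in> X" and pq: "p \<le> q" and rs: "r \<le> s"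
  shows "\<phi> (M (Eb p q) (Eb r s)) = M (G p q) (G r s)"
proof -
  have GU: "G a b = U a b" if "a \<in> X" "b \<in> X" "a < b" for a b
    using UV(1)[OF that] all that by simp
  have cl: "M (fp a) (G a b) = G a b" if "a \<in> X" "b \<in> X" "a \<le> b" for a b
  proof (cases "a = b")
    case True then show ?thesis using fp_idem[OF that(1)] Gpp by simp
  next
    case False then show ?thesis using UL[of a b] GU[of a b] that by simp
  qed
  have cr: "M (G a b) (fp b) = G a b" if "a \<in> X" "b \<in> X" "a \<le> b" for a b
  proof (cases "a = b")
    case True then show ?thesis using fp_idem[OF that(1)] Gpp by simp
  next
    case False then show ?thesis using UR[of a b] GU[of a b] that by simp
  qed
  show ?thesis
  proof (cases "q = r")
    case False
    have "M (G p q) (G r s) = M (M (G p q) (fp q)) (M (fp r) (G r s))" using cl[OF r s rs] cr[OF p q pq] by simp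
    also have "\<dots> = M (G p q) (M (M (fp q) (fp r)) (G r s))" by (simp only: M_assoc[OF fin])
    also have "\<dots> = 0" using fp_orth[OF q r False] by (simp add: M_zero_left M_zero_right)
    finally show ?thesis using EE_zero[OF p q pq rs False] phi_zero by simp
  next
    case True
    then have qs: "q \<le> s" using rs by simp
    have "M (G p q) (G q s) = G p s"
    proof (cases "p = q")
      case True then show ?thesis using cl[OF q s qs] Gpp by simp
    next
      case pq': False
      show ?thesis
      proof (cases "q = s")
        case True then show ?thesis using cr[OF p q pq] Gpp by simp
      next
        case False
        have "p < q" "q < s" using pq pq' qs False by auto
        then show ?thesis using chain_U[OF p q s] GU p q s by (auto intro: order.strict_trans)
      qed
    qed
    then show ?thesis using True EE_same[OF p q pq qs] unfolding G_def by simp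
  qed
qed

lemma basis_anti:
  assumes all: "\<forall>p\<in>X. \<forall>q\<in>X. p < q \<longrightarrow> U p q = 0"
    and p: "p \<in> X" and q: "q \<in> X" and r: "r \<in> X" and s: "s \<in> X" and pq: "p \<le> q" and rs: "r \<le> s"
  shows "\<phi> (M (Eb p q) (Eb r s)) = M (G r s) (G p q)"
proof -
  have GV: "G a b = V a b" if "a \<in> X" "b \<in> X" "a < b" for a b
    using UV(1)[OF that] all that by simp
  have cl: "M (fp b) (G a b) = G a b" if "a \<in> X" "b \<in> X" "a \<le> b" for a b
  proof (cases "a = b")
    case True then show ?thesis using fp_idem[OF that(1)] Gpp by simp
  next
    case False then show ?thesis using VL[of a b] GV[of a b] that by simp
  qed
  have cr: "M (G a b) (fp a) = G a b" if "a \<in> X" "b \<in> X" "a \<le> b" for a b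
  proof (cases "a = b")
    case True then show ?thesis using fp_idem[OF that(1)] Gpp by simp
  next
    case False then show ?thesis using VR[of a b] GV[of a b] that by simp
  qed
  show ?thesis
  proof (cases "q = r")
    case False
    have "M (G r s) (G p q) = M (M (G r s) (fp r)) (M (fp q) (G p q))" using cl[OF p q pq] cr[OF r s rs] by simp
    also have "\<dots> = M (G r s) (M (M (fp r) (fp q)) (G p q))" by (simp only: M_assoc[OF fin])
    also have "\<dots> = 0" using fp_orth[OF r q] False by (simp add: M_zero_left M_zero_right)
    finally show ?thesis using EE_zero[OF p q pq rs False] phi_zero by simp
  next
    case True
    then have qs: "q \<le> s" using rs by simp
    have "M (G q s) (G p q) = G p s"
    proof (cases "p = q")
      case True then show ?thesis using cr[OF q s qs] Gpp by simp
    next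
      case pq': False
      show ?thesis
      proof (cases "q = s")
        case True then show ?thesis using cl[OF p q pq] Gpp by simp
      next
        case False
        have "p < q" "q < s" using pq pq' qs False by auto
        then show ?thesis using chain_V[OF p q s] GV p q s by (auto intro: order.strict_trans)
      qed
    qed
    then show ?thesis using True EE_same[OF p q pq qs] unfolding G_def by simp
  qed
qed

lemma sc_sc: "sc a (sc b x) = sc b (sc a x)" by (simp add: sc_def fun_eq_iff mult.left_commute)
lemma sc_sc2: "sc a (sc b x) = sc (a * b) x" by (simp add: sc_def fun_eq_iff mult.assoc)

lemma phi_decomp: assumes f: "f \<in> inc_alg X"
  shows "\<phi> f = (\<Sum>i\<in>PX X. sc (f (fst i) (snd i)) (G (fst i) (snd i)))"
proof -
  have "\<phi> f = \<phi> (\<Sum>i\<in>PX X. sc (f (fst i) (snd i)) (Eb (fst i) (snd i)))"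
    using decomp[OF fin fin f] by simp
  also have "\<dots> = (\<Sum>i\<in>PX X. \<phi> (sc (f (fst i) (snd i)) (Eb (fst i) (snd i))))"
    by (rule phi_sum) (auto simp: PX_def intro!: inc_alg_sc Eb_alg)
  also have "\<dots> = (\<Sum>i\<in>PX X. sc (f (fst i) (snd i)) (G (fst i) (snd i)))"
    by (rule sum.cong[OF refl]) (auto simp: PX_def G_def intro!: phi_sc Eb_alg)
  finally show ?thesis .
qed

lemma E_alg: "i \<in> PX X \<Longrightarrow> Eb (fst i) (snd i) \<in> inc_alg X"
  by (auto simp: PX_def intro!: Eb_alg)

lemma phi_M_expand: assumes f: "f \<in> inc_alg X" and g: "g \<in> inc_alg X"
  shows "\<phi> (M f g) = (\<Sum>i\<in>PX X. \<Sum>j\<in>PX X. sc (f (fst i) (snd i)) (sc (g (fst j) (snd j))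
            (\<phi> (M (Eb (fst i) (snd i)) (Eb (fst j) (snd j))))))"
proof -
  let ?E = "\<lambda>i. Eb (fst i) (snd i)"
  have "M f g = M (\<Sum>i\<in>PX X. sc (f (fst i) (snd i)) (?E i)) (\<Sum>j\<in>PX X. sc (g (fst j) (snd j)) (?E j))"
    using decomp[OF fin fin f] decomp[OF fin fin g] by simp
  also have "\<dots> = (\<Sum>i\<in>PX X. \<Sum>j\<in>PX X. sc (f (fst i) (snd i)) (sc (g (fst j) (snd j)) (M (?E i) (?E j))))"
    unfolding M_sum_left unfolding M_sum_right M_sc_left M_sc_right by (simp only: sc_sc2 mult.commute)
  finally have e: "M f g = \<dots>" .
  have mem: "sc (f (fst i) (snd i)) (sc (g (fst j) (snd j)) (M (?E i) (?E j))) \<in> inc_alg X"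
    if "i \<in> PX X" "j \<in> PX X" for i j
    using that by (intro inc_alg_sc inc_alg_M E_alg)
  show ?thesis unfolding e
    apply (subst phi_sum)
     apply (rule inc_alg_sum, erule (1) mem)
    apply (rule sum.cong[OF refl])
    apply (subst phi_sum)
     apply (erule (1) mem)
    apply (rule sum.cong[OF refl])
    apply (subst phi_sc, rule inc_alg_sc, intro inc_alg_M E_alg, assumption+)
    apply (subst phi_sc, intro inc_alg_M E_alg, assumption+)
    apply (rule refl)
    done
qed

lemma ext_hom:
  assumes all: "\<forall>p\<in>X. \<forall>q\<in>X. p < q \<longrightarrow> V p q = 0"
    and f: "f \<in> inc_alg X" and g: "g \<in> inc_alg X"
  shows "\<phi> (M f g) = M (\<phi> f) (\<phi> g)"
proof -
  let ?G = "\<lambda>i. G (fst i) (snd i)"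
  have "M (\<phi> f) (\<phi> g) = M (\<Sum>i\<in>PX X. sc (f (fst i) (snd i)) (?G i)) (\<Sum>j\<in>PX X. sc (g (fst j) (snd j)) (?G j))"
    unfolding phi_decomp[OF f] phi_decomp[OF g] ..
  also have "\<dots> = (\<Sum>i\<in>PX X. \<Sum>j\<in>PX X. sc (f (fst i) (snd i)) (sc (g (fst j) (snd j)) (M (?G i) (?G j))))"
    unfolding M_sum_left unfolding M_sum_right M_sc_left M_sc_right by (simp only: sc_sc2 mult.commute)
  also have "\<dots> = \<phi> (M f g)"
    unfolding phi_M_expand[OF f g]
    by (intro sum.cong refl arg_cong[where f="sc _"] arg_cong[where f="sc _"] basis_hom[OF all, symmetric])
      (auto simp: PX_def)
  finally show ?thesis by simp
qed

lemma ext_anti: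
  assumes all: "\<forall>p\<in>X. \<forall>q\<in>X. p < q \<longrightarrow> U p q = 0"
    and f: "f \<in> inc_alg X" and g: "g \<in> inc_alg X"
  shows "\<phi> (M f g) = M (\<phi> g) (\<phi> f)"
proof -
  let ?G = "\<lambda>i. G (fst i) (snd i)"
  have "M (\<phi> g) (\<phi> f) = M (\<Sum>j\<in>PX X. sc (g (fst j) (snd j)) (?G j)) (\<Sum>i\<in>PX X. sc (f (fst i) (snd i)) (?G i))"
    unfolding phi_decomp[OF f] phi_decomp[OF g] ..
  also have "\<dots> = (\<Sum>j\<in>PX X. \<Sum>i\<in>PX X. sc (g (fst j) (snd j)) (sc (f (fst i) (snd i)) (M (?G j) (?G i))))"
    unfolding M_sum_left unfolding M_sum_right M_sc_left M_sc_right by (simp only: sc_sc2 mult.commute)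
  also have "\<dots> = (\<Sum>i\<in>PX X. \<Sum>j\<in>PX X. sc (g (fst j) (snd j)) (sc (f (fst i) (snd i)) (M (?G j) (?G i))))"
    by (rule sum.swap)
  also have "\<dots> = (\<Sum>i\<in>PX X. \<Sum>j\<in>PX X. sc (f (fst i) (snd i)) (sc (g (fst j) (snd j)) (M (?G j) (?G i))))"
    by (simp only: sc_sc2 mult.commute)
  also have "\<dots> = \<phi> (M f g)"
    unfolding phi_M_expand[OF f g]
    by (intro sum.cong refl arg_cong[where f="sc _"] arg_cong[where f="sc _"] basis_anti[OF all, symmetric])
      (auto simp: PX_def)
  finally show ?thesis by simp
qed

end

theorem corollary4p5:
  fixes X :: "'a::order set" and \<phi> :: "('a \<Rightarrow> 'a \<Rightarrow> 'b::field) \<Rightarrow> ('a \<Rightarrow> 'a \<Rightarrow> 'b)"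
  assumes "finite X" and "connected_poset X"
    and "(2::'b) \<noteq> 0"
    and "bij_betw \<phi> (inc_alg X) (inc_alg X)"
    and "inc_linear X \<phi>"
    and "\<phi> ` inc_idempotents X \<subseteq> inc_idempotents X"
  shows "inc_automorphism X \<phi> \<or> inc_anti_automorphism X \<phi>"
proof -
  note a = assms
  interpret S: setting X \<phi>
  proof (unfold_locales)
    show "inc_linear X \<phi>" by (rule a(5))
    show "\<And>f. f \<in> inc_alg X \<Longrightarrow> \<phi> f \<in> inc_alg X" using a(4) by (rule bij_betw_apply)
    show "finite X" by (rule a(1))
    show "(2::'b) \<noteq> 0" by (rule a(3))
    show "inj_on \<phi> (inc_alg X)" using a(4) by (rule bij_betw_imp_inj_on)
    show "\<phi> ` inc_alg X = inc_alg X" using a(4) by (rule bij_betw_imp_surj_on)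
    show "\<And>e. e \<in> inc_idempotents X \<Longrightarrow> \<phi> e \<in> inc_idempotents X" using a(6) by blast
  qed
  from S.dichotomy[OF a(2)] show ?thesis
  proof
    assume h: "\<forall>p\<in>X. \<forall>q\<in>X. p < q \<longrightarrow> S.V p q = 0"
    have "inc_automorphism X \<phi>" unfolding inc_automorphism_def
      using a(4) a(5) S.ext_hom[OF h] by blast
    then show ?thesis ..
  next
    assume h: "\<forall>p\<in>X. \<forall>q\<in>X. p < q \<longrightarrow> S.U p q = 0"
    have "inc_anti_automorphism X \<phi>" unfolding inc_anti_automorphism_def
      using a(4) a(5) S.ext_anti[OF h] by blast
    then show ?thesis ..
  qed
qed

end
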